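(* With $F$ as described in the context, for $(A,g,(a_{ij})),(B,h,(b_{ij}))\in U(M(\rho,k))\times{\rm Aut}_0(\mathcal C)\times\mathcal T$ we have $F(A,g,(a_{ij})_{i\rho j})=F(B,h,(b_{ij})_{i\rho j})$ if and only if $g=h$ and there exist $d_1,\dots,d_n\in k^*$ such that $a_{ij}b_{ij}^{-1}=d_id_j^{-1}$ for all $i\rho j$ and $B^g=A^g\,{\rm diag}(d_1,\dots,d_n)$. Consequently, denoting this equivalence relation by $\approx$, $F$ induces a bijection $$\big(U(M(\rho,k))\times{\rm Aut}_0(\mathcal C)\times\mathcal T\big)/\!\approx\;\longrightarrow\;{\rm Iso}_{alg}({\rm End}(\mathcal F),{\rm End}(\mathcal F')).$$
   Context: Let $k$ be a field, $n\ge 1$, $\rho$ a preorder on $\{1,\dots,n\}$, $M(\rho,k)$ the subalgebra of $M_n(k)$ of matrices with $(i,j)$-entry $0$ whenever $(i,j)\notin\rho$, and $U(M(\rho,k))$ its group of invertible elements. Write $i\sim j$ iff $i\rho j$ and $j\rho i$; $\mathcal C$ is the set of classes, $\hat i$ the class of $i$, ordered by $\hat i\le\hat j$ iff $i\rho j$; $m_\alpha=|\alpha|$. A $\rho$-flag $(V,(V_\alpha)_{\alpha\in\mathcal C})$ is an $n$-dimensional space with subspaces $V_\alpha$ admitting a basis $B=\bigcup_\alpha B_\alpha$ (disjoint) with $|B_\alpha|=m_\alpha$ and $\bigcup_{\beta\le\alpha}B_\beta$ a basis of $V_\alpha$; ${\rm End}(\mathcal F)$ is the algebra of linear $f:V\to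 V$ with $f(V_\alpha)\subseteq V_\alpha$. Let $\mathcal F,\mathcal F'$ be $\rho$-flags on $V,V'$, with fixed adapted bases $(v_i),(v'_i)$ (i.e. $\{v_i:\hat i\le\alpha\}$ is a basis of $V_\alpha$ for all $\alpha$, similarly for $v'_i$); for $i\rho j$, $E_{ij}(v_t)=\delta_{jt}v_i$. ${\rm Aut}_0(\mathcal C)$ is the group of poset automorphisms $g$ of $\mathcal C$ with $m_{g(\alpha)}=m_\alpha$. For $g\in{\rm Aut}_0(\mathcal C)$, $\tilde g\in S_n$ is defined by: if $\alpha=\{i_1<\dots<i_r\}$ and $g(\alpha)=\{j_1<\dots<j_r\}$ then $\tilde g(i_s)=j_s$; for $A\in M_n(k)$, $A^g$ is the matrix whose $(i,j)$-entry is the $(i,\tilde g(j))$-entry of $A$. $\mathcal T$ is the set of families $(a_{ij})_{i\rho j}$ in $k^*$ with $a_{ij}a_{jr}=a_{ir}$ whenever $i\rho j$, $j\rho r$. The map $F$: for $(A,g,(a_{ij}))$, let $w_j=\sum_i (A^g)_{ij}v'_i$, let $F_{ij}\in{\rm End}(V')$ with $F_{ij}(w_j)=a_{ij}w_i$, $F_{ij}(w_r)=0$ for $r\ne j$, and let $F(A,g,(a_{ij}))$ be the linear map ${\rm End}(\mathcal F)\to{\rm End}(\mathcal F')$ sending $E_{ij}\mapsto F_{ij}$ for $i\rho j$ (this is an algebra isomorphism). *)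

theory Defs
  imports Complex_Main "HOL-Library.FuncSet"
begin

text \<open>Indices are 1..n.  A preorder rho on {1..n} is a predicate nat => nat => bool.
  Matrices are functions nat => nat => 'k supported on {1..n} x {1..n}.\<close>

definition idx :: "nat \<Rightarrow> nat set" where "idx n = {1..n}"

definition preorder_on_idx :: "nat \<Rightarrow> (nat \<Rightarrow> nat \<Rightarrow> bool) \<Rightarrow> bool" where
  "preorder_on_idx n \<rho> \<longleftrightarrow> (\<forall>i\<in>idx n. \<rho> i i) \<and>
     (\<forall>i\<in>idx n. \<forall>j\<in>idx n. \<forall>r\<in>idx n. \<rho> i j \<longrightarrow> \<rho> j r \<longrightarrow> \<rho> i r)"

definition cls :: "nat \<Rightarrow> (nat \<Rightarrow> nat \<Rightarrow> bool) \<Rightarrow> nat \<Rightarrow> nat set" where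
  "cls n \<rho> i = {j \<in> idx n. \<rho> i j \<and> \<rho> j i}"

definition Cls :: "nat \<Rightarrow> (nat \<Rightarrow> nat \<Rightarrow> bool) \<Rightarrow> nat set set" where
  "Cls n \<rho> = cls n \<rho> ` idx n"

definition cle :: "(nat \<Rightarrow> nat \<Rightarrow> bool) \<Rightarrow> nat set \<Rightarrow> nat set \<Rightarrow> bool" where
  "cle \<rho> \<alpha> \<beta> \<longleftrightarrow> (\<exists>i\<in>\<alpha>. \<exists>j\<in>\<beta>. \<rho> i j)"

definition Mrho :: "nat \<Rightarrow> (nat \<Rightarrow> nat \<Rightarrow> bool) \<Rightarrow> (nat \<Rightarrow> nat \<Rightarrow> 'k::field) set" where
  "Mrho n \<rho> = {A. \<forall>i j. A i j \<noteq> 0 \<longrightarrow> i \<in> idx n \<and> j \<in> idx n \<and> \<rho> i j}"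

definition matmul :: "nat \<Rightarrow> (nat \<Rightarrow> nat \<Rightarrow> 'k::field) \<Rightarrow> (nat \<Rightarrow> nat \<Rightarrow> 'k) \<Rightarrow> nat \<Rightarrow> nat \<Rightarrow> 'k" where
  "matmul n A B = (\<lambda>i j. \<Sum>t\<in>idx n. A i t * B t j)"

definition matone :: "nat \<Rightarrow> nat \<Rightarrow> nat \<Rightarrow> 'k::field" where
  "matone n = (\<lambda>i j. if i \<in> idx n \<and> i = j then 1 else 0)"

definition Umat :: "nat \<Rightarrow> (nat \<Rightarrow> nat \<Rightarrow> bool) \<Rightarrow> (nat \<Rightarrow> nat \<Rightarrow> 'k::field) set" where
  "Umat n \<rho> = {A \<in> Mrho n \<rho>. \<exists>B \<in> Mrho n \<rho>. matmul n A B = matone n \<and> matmul n B A = matone n}"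

definition Aut0 :: "nat \<Rightarrow> (nat \<Rightarrow> nat \<Rightarrow> bool) \<Rightarrow> (nat set \<Rightarrow> nat set) set" where
  "Aut0 n \<rho> = {g. g \<in> extensional (Cls n \<rho>) \<and> bij_betw g (Cls n \<rho>) (Cls n \<rho>) \<and>
      (\<forall>\<alpha>\<in>Cls n \<rho>. \<forall>\<beta>\<in>Cls n \<rho>. cle \<rho> \<alpha> \<beta> \<longleftrightarrow> cle \<rho> (g \<alpha>) (g \<beta>)) \<and>
      (\<forall>\<alpha>\<in>Cls n \<rho>. card (g \<alpha>) = card \<alpha>)}"

text \<open>gtilde: the s-th smallest element of the class of i goes to the s-th smallest of its image.\<close>
definition gtilde :: "nat \<Rightarrow> (nat \<Rightarrow> nat \<Rightarrow> bool) \<Rightarrow> (nat set \<Rightarrow> nat set) \<Rightarrow> nat \<Rightarrow> nat" where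
  "gtilde n \<rho> g i = sorted_list_of_set (g (cls n \<rho> i)) ! card {t \<in> cls n \<rho> i. t < i}"

definition matg :: "nat \<Rightarrow> (nat \<Rightarrow> nat \<Rightarrow> bool) \<Rightarrow> (nat \<Rightarrow> nat \<Rightarrow> 'k::field) \<Rightarrow> (nat set \<Rightarrow> nat set) \<Rightarrow> nat \<Rightarrow> nat \<Rightarrow> 'k" where
  "matg n \<rho> A g = (\<lambda>i j. if j \<in> idx n then A i (gtilde n \<rho> g j) else 0)"

text \<open>The set T of multiplicative families (a_ij)_{i rho j} in k^*
  (stored as a function, set to 0 off rho).\<close>
definition Tfam :: "nat \<Rightarrow> (nat \<Rightarrow> nat \<Rightarrow> bool) \<Rightarrow> (nat \<Rightarrow> nat \<Rightarrow> 'k::field) set" where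
  "Tfam n \<rho> = {a. (\<forall>i j. \<not> (i \<in> idx n \<and> j \<in> idx n \<and> \<rho> i j) \<longrightarrow> a i j = 0) \<and>
      (\<forall>i\<in>idx n. \<forall>j\<in>idx n. \<rho> i j \<longrightarrow> a i j \<noteq> 0) \<and>
      (\<forall>i\<in>idx n. \<forall>j\<in>idx n. \<forall>r\<in>idx n. \<rho> i j \<longrightarrow> \<rho> j r \<longrightarrow> a i j * a j r = a i r)}"

definition Triples :: "nat \<Rightarrow> (nat \<Rightarrow> nat \<Rightarrow> bool) \<Rightarrow>
    ((nat \<Rightarrow> nat \<Rightarrow> 'k::field) \<times> (nat set \<Rightarrow> nat set) \<times> (nat \<Rightarrow> nat \<Rightarrow> 'k)) set" where
  "Triples n \<rho> = Umat n \<rho> \<times> Aut0 n \<rho> \<times> Tfam n \<rho>"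

definition approx_rel :: "nat \<Rightarrow> (nat \<Rightarrow> nat \<Rightarrow> bool) \<Rightarrow>
    (((nat \<Rightarrow> nat \<Rightarrow> 'k::field) \<times> (nat set \<Rightarrow> nat set) \<times> (nat \<Rightarrow> nat \<Rightarrow> 'k)) \<times>
     ((nat \<Rightarrow> nat \<Rightarrow> 'k) \<times> (nat set \<Rightarrow> nat set) \<times> (nat \<Rightarrow> nat \<Rightarrow> 'k))) set" where
  "approx_rel n \<rho> = {((A, g, a), (B, h, b)). (A, g, a) \<in> Triples n \<rho> \<and> (B, h, b) \<in> Triples n \<rho> \<and>
      g = h \<and> (\<exists>d. (\<forall>i\<in>idx n. d i \<noteq> 0) \<and>
        (\<forall>i\<in>idx n. \<forall>j\<in>idx n. \<rho> i j \<longrightarrow> a i j * inverse (b i j) = d i * inverse (d j)) \<and>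
        (\<forall>i\<in>idx n. \<forall>j\<in>idx n. matg n \<rho> B g i j = matg n \<rho> A g i j * d j))}"

text \<open>Flags with adapted bases.  V is the whole space 'v (a vector space over 'k with scalar
  multiplication s); v 1, ..., v n is a basis; Vf alpha is the flag subspace indexed by the class alpha.\<close>
definition is_basis_fam :: "('k::field \<Rightarrow> 'v::ab_group_add \<Rightarrow> 'v) \<Rightarrow> nat \<Rightarrow> (nat \<Rightarrow> 'v) \<Rightarrow> bool" where
  "is_basis_fam s n v \<longleftrightarrow> inj_on v (idx n) \<and> \<not> module.dependent s (v ` idx n) \<and>
      module.span s (v ` idx n) = UNIV"

definition adapted_flag :: "('k::field \<Rightarrow> 'v::ab_group_add \<Rightarrow> 'v) \<Rightarrow> nat \<Rightarrow> (nat \<Rightarrow> nat \<Rightarrow> bool)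
    \<Rightarrow> (nat set \<Rightarrow> 'v set) \<Rightarrow> (nat \<Rightarrow> 'v) \<Rightarrow> bool" where
  "adapted_flag s n \<rho> Vf v \<longleftrightarrow> is_basis_fam s n v \<and>
      (\<forall>\<alpha>\<in>Cls n \<rho>. Vf \<alpha> = module.span s (v ` {i \<in> idx n. cle \<rho> (cls n \<rho> i) \<alpha>}))"

definition EndF :: "('k::field \<Rightarrow> 'v::ab_group_add \<Rightarrow> 'v) \<Rightarrow> nat \<Rightarrow> (nat \<Rightarrow> nat \<Rightarrow> bool)
    \<Rightarrow> (nat set \<Rightarrow> 'v set) \<Rightarrow> ('v \<Rightarrow> 'v) set" where
  "EndF s n \<rho> Vf = {f. Vector_Spaces.linear s s f \<and> (\<forall>\<alpha>\<in>Cls n \<rho>. f ` Vf \<alpha> \<subseteq> Vf \<alpha>)}"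

definition Iso_alg :: "('k::field \<Rightarrow> 'v::ab_group_add \<Rightarrow> 'v) \<Rightarrow> ('k \<Rightarrow> 'w::ab_group_add \<Rightarrow> 'w)
    \<Rightarrow> ('v \<Rightarrow> 'v) set \<Rightarrow> ('w \<Rightarrow> 'w) set \<Rightarrow> (('v \<Rightarrow> 'v) \<Rightarrow> ('w \<Rightarrow> 'w)) set" where
  "Iso_alg s s' E E' = {\<phi>. \<phi> \<in> extensional E \<and> bij_betw \<phi> E E' \<and>
      (\<forall>f\<in>E. \<forall>f2\<in>E. \<phi> (\<lambda>x. f x + f2 x) = (\<lambda>y. \<phi> f y + \<phi> f2 y)) \<and>
      (\<forall>c. \<forall>f\<in>E. \<phi> (\<lambda>x. s c (f x)) = (\<lambda>y. s' c (\<phi> f y))) \<and>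
      (\<forall>f\<in>E. \<forall>f2\<in>E. \<phi> (f \<circ> f2) = \<phi> f \<circ> \<phi> f2) \<and>
      \<phi> id = id}"

text \<open>E_ij coordinates: f = sum over i rho j of c_ij E_ij with c_ij the v_i-coordinate of f(v_j).\<close>
definition coordE :: "('k::field \<Rightarrow> 'v::ab_group_add \<Rightarrow> 'v) \<Rightarrow> nat \<Rightarrow> (nat \<Rightarrow> 'v) \<Rightarrow> ('v \<Rightarrow> 'v)
    \<Rightarrow> nat \<Rightarrow> nat \<Rightarrow> 'k" where
  "coordE s n v f i j = module.representation s (v ` idx n) (f (v j)) (v i)"

text \<open>w_j = sum_i (A^g)_ij v'_i and F_ij with F_ij(w_j) = a_ij w_i, F_ij(w_r) = 0 (r /= j).\<close>
definition wvec :: "('k::field \<Rightarrow> 'w::ab_group_add \<Rightarrow> 'w) \<Rightarrow> nat \<Rightarrow> (nat \<Rightarrow> nat \<Rightarrow> bool) \<Rightarrow> (nat \<Rightarrow> 'w)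
    \<Rightarrow> (nat \<Rightarrow> nat \<Rightarrow> 'k) \<Rightarrow> (nat set \<Rightarrow> nat set) \<Rightarrow> nat \<Rightarrow> 'w" where
  "wvec s' n \<rho> v' A g j = (\<Sum>i\<in>idx n. s' (matg n \<rho> A g i j) (v' i))"

definition Fij :: "('k::field \<Rightarrow> 'w::ab_group_add \<Rightarrow> 'w) \<Rightarrow> nat \<Rightarrow> (nat \<Rightarrow> nat \<Rightarrow> bool) \<Rightarrow> (nat \<Rightarrow> 'w)
    \<Rightarrow> (nat \<Rightarrow> nat \<Rightarrow> 'k) \<Rightarrow> (nat set \<Rightarrow> nat set) \<Rightarrow> (nat \<Rightarrow> nat \<Rightarrow> 'k) \<Rightarrow> nat \<Rightarrow> nat \<Rightarrow> 'w \<Rightarrow> 'w" where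
  "Fij s' n \<rho> v' A g a i j = (\<lambda>x.
      s' (module.representation s' (wvec s' n \<rho> v' A g ` idx n) x (wvec s' n \<rho> v' A g j) * a i j)
         (wvec s' n \<rho> v' A g i))"

text \<open>F(A,g,a): the linear map End(F) -> End(F') with E_ij |-> F_ij (extensional on End(F)).\<close>
definition Fmap :: "('k::field \<Rightarrow> 'v::ab_group_add \<Rightarrow> 'v) \<Rightarrow> ('k \<Rightarrow> 'w::ab_group_add \<Rightarrow> 'w) \<Rightarrow> nat
    \<Rightarrow> (nat \<Rightarrow> nat \<Rightarrow> bool) \<Rightarrow> (nat set \<Rightarrow> 'v set) \<Rightarrow> (nat \<Rightarrow> 'v) \<Rightarrow> (nat \<Rightarrow> 'w)
    \<Rightarrow> (nat \<Rightarrow> nat \<Rightarrow> 'k) \<times> (nat set \<Rightarrow> nat set) \<times> (nat \<Rightarrow> nat \<Rightarrow> 'k) \<Rightarrow> ('v \<Rightarrow> 'v) \<Rightarrow> ('w \<Rightarrow> 'w)" where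
  "Fmap s s' n \<rho> Vf v v' T = (case T of (A, g, a) \<Rightarrow>
     restrict (\<lambda>f. \<lambda>x. \<Sum>(i, j)\<in>{(i, j). i \<in> idx n \<and> j \<in> idx n \<and> \<rho> i j}.
                 s' (coordE s n v f i j) (Fij s' n \<rho> v' A g a i j x))
              (EndF s n \<rho> Vf))"

end

theory Submission
  imports Defs
begin


lemma finite_idx[simp]: "finite (idx n)" by (simp add: idx_def)

lemma lin_facts:
  assumes "Vector_Spaces.linear s1 s2 f"
  shows "f (x + y) = f x + f y" "f (s1 c x) = s2 c (f x)" "f 0 = 0"
    "f (sum g K) = (\<Sum>k\<in>K. f (g k))"
    "f (\<Sum>k\<in>K. s1 (c' k) (g k)) = (\<Sum>k\<in>K. s2 (c' k) (f (g k)))"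
proof -
  interpret module_hom s1 s2 f using assms by (simp add: module_hom_iff_linear)
  show "f (x + y) = f x + f y" "f (s1 c x) = s2 c (f x)" "f 0 = 0"
    "f (sum g K) = (\<Sum>k\<in>K. f (g k))" 
    "f (\<Sum>k\<in>K. s1 (c' k) (g k)) = (\<Sum>k\<in>K. s2 (c' k) (f (g k)))" by (simp_all add: add scale sum)
qed

locale bfam = vector_space scale for scale :: "'k::field \<Rightarrow> 'v::ab_group_add \<Rightarrow> 'v" +
  fixes n :: nat and u :: "nat \<Rightarrow> 'v"
  assumes isb: "is_basis_fam scale n u"
begin

definition crd :: "'v \<Rightarrow> nat \<Rightarrow> 'k" where
  "crd x i = representation (u ` idx n) x (u i)"

lemma injU: "inj_on u (idx n)" and indep: "independent (u ` idx n)"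
  and spanU: "span (u ` idx n) = UNIV"
  using isb by (auto simp: is_basis_fam_def)

lemma finU: "finite (u ` idx n)" by simp

lemma expand: "(\<Sum>i\<in>idx n. scale (crd x i) (u i)) = x"
proof -
  have "(\<Sum>b\<in>u ` idx n. scale (representation (u ` idx n) x b) b) = x"
    by (rule sum_representation_eq) (use indep spanU in auto)
  then show ?thesis using injU by (simp add: sum.reindex crd_def)
qed

lemma crd_add: "crd (x + y) i = crd x i + crd y i"
  unfolding crd_def by (subst representation_add) (use indep spanU in auto)

lemma crd_scale: "crd (scale c x) i = c * crd x i"
  unfolding crd_def by (subst representation_scale) (use indep spanU in auto)

lemma crd_zero[simp]: "crd 0 i = 0"
  unfolding crd_def by (simp add: representation_zero)

lemma crd_sum: "crd (sum f K) i = (\<Sum>k\<in>K. crd (f k) i)"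
  unfolding crd_def by (subst representation_sum) (use indep spanU in auto)

lemma crd_basis: "j \<in> idx n \<Longrightarrow> i \<in> idx n \<Longrightarrow> crd (u j) i = (if i = j then 1 else 0)"
  unfolding crd_def using injU
  by (subst representation_basis) (use indep in \<open>auto simp: inj_on_def\<close>)

lemma crd_lin: "i \<in> idx n \<Longrightarrow> crd (\<Sum>j\<in>idx n. scale (c j) (u j)) i = c i"
  by (simp add: crd_sum crd_scale crd_basis if_distrib cong: if_cong)

lemma crd_eqI: "(\<And>i. i \<in> idx n \<Longrightarrow> crd x i = crd y i) \<Longrightarrow> x = y"
  by (metis (no_types, lifting) expand sum.cong)

lemma u_nz: "i \<in> idx n \<Longrightarrow> u i \<noteq> 0"
  using crd_basis[of i i] by auto

lemma in_span_iff:
  assumes "S \<subseteq> idx n"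
  shows "x \<in> span (u ` S) \<longleftrightarrow> (\<forall>i\<in>idx n - S. crd x i = 0)"
proof
  assume "x \<in> span (u ` S)"
  then obtain c where c: "x = (\<Sum>b\<in>u ` S. scale (c b) b)"
    using span_finite[of "u ` S"] assms finite_subset by fastforce
  have inS: "inj_on u S" using injU assms inj_on_subset by blast
  have "x = (\<Sum>j\<in>S. scale (c (u j)) (u j))" using c inS by (simp add: sum.reindex)
  also have "\<dots> = (\<Sum>j\<in>idx n. scale (if j \<in> S then c (u j) else 0) (u j))"
    using assms by (auto intro!: sum.mono_neutral_cong_left)
  finally have x: "x = \<dots>" .
  show "\<forall>i\<in>idx n - S. crd x i = 0"
    by (subst x, auto simp: crd_lin)
next
  assume h: "\<forall>i\<in>idx n - S. crd x i = 0"
  have "x = (\<Sum>i\<in>idx n. scale (crd x i) (u i))" by (simp add: expand)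
  also have "\<dots> = (\<Sum>i\<in>S. scale (crd x i) (u i))"
    using assms h by (intro sum.mono_neutral_cong_right) auto
  also have "\<dots> \<in> span (u ` S)"
    by (intro span_sum span_scale span_base) auto
  finally show "x \<in> span (u ` S)" .
qed

definition matu :: "('v \<Rightarrow> 'v) \<Rightarrow> nat \<Rightarrow> nat \<Rightarrow> 'k" where
  "matu f i j = (if i \<in> idx n \<and> j \<in> idx n then crd (f (u j)) i else 0)"

lemma matu_in: "i \<in> idx n \<Longrightarrow> j \<in> idx n \<Longrightarrow> matu f i j = crd (f (u j)) i"
  by (simp add: matu_def)

lemma matu_out: "i \<notin> idx n \<or> j \<notin> idx n \<Longrightarrow> matu f i j = 0"
  by (auto simp: matu_def)

definition linop :: "(nat \<Rightarrow> nat \<Rightarrow> 'k) \<Rightarrow> 'v \<Rightarrow> 'v" where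
  "linop M x = (\<Sum>i\<in>idx n. scale (\<Sum>j\<in>idx n. M i j * crd x j) (u i))"

lemma linop_linear: "Vector_Spaces.linear scale scale (linop M)"
  unfolding Vector_Spaces.linear_iff
proof (intro conjI allI)
  show "vector_space scale" by unfold_locales
  show "vector_space scale" by unfold_locales
  fix x y :: 'v and c :: 'k
  show "linop M (x + y) = linop M x + linop M y"
    unfolding linop_def crd_add
    by (simp add: distrib_left sum.distrib scale_left_distrib)
  show "linop M (scale c x) = scale c (linop M x)"
    unfolding linop_def crd_scale
    by (simp add: scale_sum_right sum_distrib_left mult.left_commute)
qed

lemma linop_matu: assumes "Vector_Spaces.linear scale scale f" shows "linop (matu f) = f"
proof
  fix x
  have "f x = f (\<Sum>j\<in>idx n. scale (crd x j) (u j))" by (simp add: expand)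
  also have "\<dots> = (\<Sum>j\<in>idx n. scale (crd x j) (f (u j)))"
    by (simp add: lin_facts(5)[OF assms])
  also have "\<dots> = (\<Sum>j\<in>idx n. scale (crd x j) (\<Sum>i\<in>idx n. scale (matu f i j) (u i)))"
    by (intro sum.cong refl) (simp add: matu_in expand cong: sum.cong)
  also have "\<dots> = (\<Sum>j\<in>idx n. \<Sum>i\<in>idx n. scale (matu f i j * crd x j) (u i))"
    by (simp add: scale_sum_right mult.commute)
  also have "\<dots> = linop (matu f) x"
    unfolding linop_def by (subst sum.swap) (simp add: scale_sum_left)
  finally show "linop (matu f) x = f x" by simp
qed

lemma linop_u: "j \<in> idx n \<Longrightarrow> linop M (u j) = (\<Sum>i\<in>idx n. scale (M i j) (u i))"
  unfolding linop_def by (simp add: crd_basis if_distrib cong: if_cong)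

lemma matu_linop: "i \<in> idx n \<Longrightarrow> j \<in> idx n \<Longrightarrow> matu (linop M) i j = M i j"
  by (simp add: matu_in linop_u crd_lin)

lemma linop_eqI: "(\<And>i j. i \<in> idx n \<Longrightarrow> j \<in> idx n \<Longrightarrow> M i j = N i j) \<Longrightarrow> linop M = linop N"
  unfolding linop_def by (intro ext sum.cong refl arg_cong2[where f=scale]) auto

lemma lin_eqI:
  assumes "Vector_Spaces.linear scale scale f" "Vector_Spaces.linear scale scale g"
    "\<And>i j. i \<in> idx n \<Longrightarrow> j \<in> idx n \<Longrightarrow> matu f i j = matu g i j"
  shows "f = g"
proof -
  have "linop (matu f) = linop (matu g)" by (rule linop_eqI) (rule assms(3))
  then show ?thesis using linop_matu[OF assms(1)] linop_matu[OF assms(2)] by simp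
qed

lemma matu_comp:
  assumes "Vector_Spaces.linear scale scale f" "Vector_Spaces.linear scale scale g"
    and ij: "i \<in> idx n" "j \<in> idx n"
  shows "matu (f \<circ> g) i j = (\<Sum>k\<in>idx n. matu f i k * matu g k j)"
proof -
  have "f (g (u j)) = f (\<Sum>k\<in>idx n. scale (matu g k j) (u k))" 
    using ij by (simp add: matu_in expand cong: sum.cong)
  also have "\<dots> = (\<Sum>k\<in>idx n. scale (matu g k j) (f (u k)))" by (simp add: lin_facts(5)[OF assms(1)])
  finally show ?thesis using ij by (simp add: matu_in crd_sum crd_scale mult.commute cong: sum.cong)
qed

lemma matu_id: "matu id = matone n"
  by (auto simp: matu_def crd_basis matone_def fun_eq_iff)

lemma matu_add: "matu (\<lambda>x. f x + g x) i j = matu f i j + matu g i j"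
  by (simp add: matu_def crd_add)

lemma matu_scale: "matu (\<lambda>x. scale c (f x)) i j = c * matu f i j"
  by (simp add: matu_def crd_scale)

lemma endF_char:
  assumes Vf: "\<forall>\<beta>\<in>Cls n \<rho>. Vf \<beta> = span (u ` {r\<in>idx n. P \<beta> r})"
    and lo: "\<forall>s\<in>idx n. \<exists>\<beta>\<in>Cls n \<rho>. \<forall>r\<in>idx n. P \<beta> r \<longleftrightarrow> R r s"
    and tr: "\<forall>\<beta>\<in>Cls n \<rho>. \<forall>r\<in>idx n. \<forall>s\<in>idx n. P \<beta> s \<longrightarrow> R r s \<longrightarrow> P \<beta> r"
    and rf: "\<forall>s\<in>idx n. R s s"
  shows "f \<in> EndF scale n \<rho> Vf \<longleftrightarrow> Vector_Spaces.linear scale scale f \<and> (\<forall>r\<in>idx n. \<forall>s\<in>idx n. matu f r s \<noteq> 0 \<longrightarrow> R r s)"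
proof
  assume f: "f \<in> EndF scale n \<rho> Vf"
  then have lf: "Vector_Spaces.linear scale scale f" and pres: "\<forall>\<alpha>\<in>Cls n \<rho>. f ` Vf \<alpha> \<subseteq> Vf \<alpha>"
    by (auto simp: EndF_def)
  have "matu f r s = 0" if r: "r \<in> idx n" and s: "s \<in> idx n" and nR: "\<not> R r s" for r s
  proof -
    obtain \<beta> where b: "\<beta> \<in> Cls n \<rho>" "\<forall>r\<in>idx n. P \<beta> r \<longleftrightarrow> R r s" using lo s by blast
    have "u s \<in> Vf \<beta>" using Vf b rf s by (auto intro!: span_base)
    then have "f (u s) \<in> Vf \<beta>" using pres b by auto
    then have "f (u s) \<in> span (u ` {r\<in>idx n. P \<beta> r})" using Vf b by auto
    then show ?thesis using in_span_iff[of "{r\<in>idx n. P \<beta> r}"] r s nR b by (auto simp: matu_def)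
  qed
  then show "Vector_Spaces.linear scale scale f \<and> (\<forall>r\<in>idx n. \<forall>s\<in>idx n. matu f r s \<noteq> 0 \<longrightarrow> R r s)"
    using lf by blast
next
  assume h: "Vector_Spaces.linear scale scale f \<and> (\<forall>r\<in>idx n. \<forall>s\<in>idx n. matu f r s \<noteq> 0 \<longrightarrow> R r s)"
  then have lf: "Vector_Spaces.linear scale scale f" by blast
  have "f x \<in> Vf \<beta>" if b: "\<beta> \<in> Cls n \<rho>" and x: "x \<in> Vf \<beta>" for \<beta> x
  proof -
    let ?S = "{r\<in>idx n. P \<beta> r}"
    have xs: "x \<in> span (u ` ?S)" using x Vf b by auto
    have "\<forall>i\<in>idx n - ?S. crd x i = 0" using xs in_span_iff[of ?S] by auto
    have "f x = f (\<Sum>j\<in>idx n. scale (crd x j) (u j))" by (simp add: expand)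
    also have "\<dots> = (\<Sum>j\<in>idx n. scale (crd x j) (f (u j)))" by (simp add: lin_facts(5)[OF lf])
    finally have fx: "f x = \<dots>" .
    have "crd (f x) r = 0" if r: "r \<in> idx n" "\<not> P \<beta> r" for r
    proof -
      have "crd (f x) r = (\<Sum>j\<in>idx n. crd x j * matu f r j)"
        using r by (simp add: fx crd_sum crd_scale matu_in cong: sum.cong)
      also have "\<dots> = 0"
      proof (intro sum.neutral ballI)
        fix j assume j: "j \<in> idx n"
        show "crd x j * matu f r j = 0"
        proof (cases "P \<beta> j")
          case True
          then have "\<not> R r j" using tr b r j by blast
          then show ?thesis using h r j by auto
        next
          case False then show ?thesis using \<open>\<forall>i\<in>idx n - ?S. crd x i = 0\<close> j by auto
        qed
      qed
      finally show ?thesis .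
    qed
    then have "f x \<in> span (u ` ?S)" using in_span_iff[of ?S] by auto
    then show ?thesis using Vf b by auto
  qed
  then show "f \<in> EndF scale n \<rho> Vf" using lf by (auto simp: EndF_def)
qed

lemma linop_add: "linop (\<lambda>i j. M i j + N i j) x = linop M x + linop N x"
  unfolding linop_def by (simp add: distrib_right sum.distrib scale_left_distrib)

lemma linop_scale: "linop (\<lambda>i j. c * M i j) x = scale c (linop M x)"
  unfolding linop_def by (simp add: scale_sum_right sum_distrib_left mult.assoc)

lemma crd_linop: "j \<in> idx n \<Longrightarrow> crd (linop N x) j = (\<Sum>k\<in>idx n. N j k * crd x k)"
  unfolding linop_def by (rule crd_lin)

lemma linop_mul: "linop (matmul n M N) = linop M \<circ> linop N"
proof
  fix x
  have "linop M (linop N x) = (\<Sum>i\<in>idx n. scale (\<Sum>j\<in>idx n. M i j * (\<Sum>k\<in>idx n. N j k * crd x k)) (u i))"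
    unfolding linop_def[of M] by (simp add: crd_linop cong: sum.cong)
  also have "\<dots> = linop (matmul n M N) x"
  proof -
    have "\<And>i. (\<Sum>j\<in>idx n. M i j * (\<Sum>k\<in>idx n. N j k * crd x k)) =
      (\<Sum>k\<in>idx n. (\<Sum>t\<in>idx n. M i t * N t k) * crd x k)"
      by (simp add: sum_distrib_left sum_distrib_right mult.assoc, subst sum.swap, simp)
    then show ?thesis unfolding linop_def matmul_def by simp
  qed
  finally show "linop (matmul n M N) x = (linop M \<circ> linop N) x" by simp
qed

lemma linop_one: "linop (matone n) = id"
proof
  fix x show "linop (matone n) x = id x"
  proof -
    have "\<And>i. i \<in> idx n \<Longrightarrow> (\<Sum>j\<in>idx n. (if i \<in> idx n \<and> i = j then 1 else 0) * crd x j) = crd x i"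
      by (simp add: if_distrib[of "\<lambda>z. z * _"] cong: if_cong)
    then show ?thesis unfolding linop_def matone_def by (simp add: expand cong: sum.cong)
  qed
qed

end



locale pre =
  fixes n :: nat and \<rho> :: "nat \<Rightarrow> nat \<Rightarrow> bool"
  assumes po: "preorder_on_idx n \<rho>"
begin

lemma rrefl: "i \<in> idx n \<Longrightarrow> \<rho> i i" using po by (auto simp: preorder_on_idx_def)
lemma rtrans: "i \<in> idx n \<Longrightarrow> j \<in> idx n \<Longrightarrow> r \<in> idx n \<Longrightarrow> \<rho> i j \<Longrightarrow> \<rho> j r \<Longrightarrow> \<rho> i r"
  using po unfolding preorder_on_idx_def by blast

lemma cls_self: "i \<in> idx n \<Longrightarrow> i \<in> cls n \<rho> i" by (simp add: cls_def rrefl)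
lemma cls_sub: "cls n \<rho> i \<subseteq> idx n" by (auto simp: cls_def)
lemma cls_fin[simp]: "finite (cls n \<rho> i)" by (rule finite_subset[OF cls_sub]) simp
lemma cls_eq: "i \<in> idx n \<Longrightarrow> j \<in> idx n \<Longrightarrow> cls n \<rho> i = cls n \<rho> j \<longleftrightarrow> \<rho> i j \<and> \<rho> j i"
proof
  assume a: "i \<in> idx n" "j \<in> idx n" "cls n \<rho> i = cls n \<rho> j"
  have "i \<in> cls n \<rho> j" using a cls_self[of i] by simp
  then show "\<rho> i j \<and> \<rho> j i" unfolding cls_def by simp
next
  assume a: "i \<in> idx n" "j \<in> idx n" "\<rho> i j \<and> \<rho> j i"
  show "cls n \<rho> i = cls n \<rho> j"
    unfolding cls_def using a rtrans by blast
qed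
lemma mem_cls: assumes "k \<in> cls n \<rho> i" "i \<in> idx n" shows "cls n \<rho> k = cls n \<rho> i"
proof -
  have "k \<in> idx n" "\<rho> i k" "\<rho> k i" using assms(1) by (auto simp: cls_def)
  then show ?thesis using cls_eq[of k i] assms(2) by simp
qed
lemma cle_cls: "i \<in> idx n \<Longrightarrow> j \<in> idx n \<Longrightarrow> cle \<rho> (cls n \<rho> i) (cls n \<rho> j) \<longleftrightarrow> \<rho> i j"
proof
  assume i: "i \<in> idx n" and j: "j \<in> idx n" and "cle \<rho> (cls n \<rho> i) (cls n \<rho> j)"
  then obtain a b where "a \<in> idx n" "b \<in> idx n" "\<rho> i a" "\<rho> a i" "\<rho> j b" "\<rho> b j" "\<rho> a b"
    by (auto simp: cle_def cls_def)
  then show "\<rho> i j" using i j rtrans by meson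
next
  assume i: "i \<in> idx n" and j: "j \<in> idx n" and "\<rho> i j"
  then show "cle \<rho> (cls n \<rho> i) (cls n \<rho> j)" unfolding cle_def using cls_self by blast
qed
lemma ClsE: "\<alpha> \<in> Cls n \<rho> \<Longrightarrow> (\<And>i. i \<in> idx n \<Longrightarrow> \<alpha> = cls n \<rho> i \<Longrightarrow> P) \<Longrightarrow> P"
  by (auto simp: Cls_def)
lemma ClsI: "i \<in> idx n \<Longrightarrow> cls n \<rho> i \<in> Cls n \<rho>" by (simp add: Cls_def)
lemma Cls_disj: "\<alpha> \<in> Cls n \<rho> \<Longrightarrow> \<beta> \<in> Cls n \<rho> \<Longrightarrow> x \<in> \<alpha> \<Longrightarrow> x \<in> \<beta> \<Longrightarrow> \<alpha> = \<beta>"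
  unfolding Cls_def using mem_cls by (metis imageE)
lemma Cls_mem: "\<alpha> \<in> Cls n \<rho> \<Longrightarrow> x \<in> \<alpha> \<Longrightarrow> \<alpha> = cls n \<rho> x \<and> x \<in> idx n"
  by (auto simp: Cls_def mem_cls dest: cls_sub[THEN subsetD])

context
  fixes g assumes gA: "g \<in> Aut0 n \<rho>"
begin

lemma g_bij: "bij_betw g (Cls n \<rho>) (Cls n \<rho>)" using gA by (auto simp: Aut0_def)
lemma g_card: "\<alpha> \<in> Cls n \<rho> \<Longrightarrow> card (g \<alpha>) = card \<alpha>" using gA by (auto simp: Aut0_def)
lemma g_cle: "\<alpha> \<in> Cls n \<rho> \<Longrightarrow> \<beta> \<in> Cls n \<rho> \<Longrightarrow> cle \<rho> \<alpha> \<beta> \<longleftrightarrow> cle \<rho> (g \<alpha>) (g \<beta>)"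
  using gA by (auto simp: Aut0_def)

lemma g_Cls: "\<alpha> \<in> Cls n \<rho> \<Longrightarrow> g \<alpha> \<in> Cls n \<rho>" using g_bij bij_betwE by blast

lemma rank_lt: assumes j: "j \<in> idx n"
  shows "card {t \<in> cls n \<rho> j. t < j} < card (cls n \<rho> j)"
  by (rule psubset_card_mono) (use cls_self[OF j] in auto)

lemma gt_mem: assumes j: "j \<in> idx n" shows "gtilde n \<rho> g j \<in> g (cls n \<rho> j)"
proof -
  have fin: "finite (g (cls n \<rho> j))" using g_Cls[OF ClsI[OF j]] by (auto elim: ClsE)
  have "card {t \<in> cls n \<rho> j. t < j} < length (sorted_list_of_set (g (cls n \<rho> j)))"
    using rank_lt[OF j] g_card[OF ClsI[OF j]] by simp
  then show ?thesis unfolding gtilde_def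
    using nth_mem fin by (metis set_sorted_list_of_set)
qed

lemma gt_idx: "j \<in> idx n \<Longrightarrow> gtilde n \<rho> g j \<in> idx n"
  using gt_mem g_Cls[OF ClsI] Cls_mem by blast

lemma cls_gt: "j \<in> idx n \<Longrightarrow> cls n \<rho> (gtilde n \<rho> g j) = g (cls n \<rho> j)"
  using gt_mem g_Cls[OF ClsI] Cls_mem by metis

lemma gt_inj: "inj_on (gtilde n \<rho> g) (idx n)"
proof (rule inj_onI)
  fix i j assume i: "i \<in> idx n" and j: "j \<in> idx n" and eq: "gtilde n \<rho> g i = gtilde n \<rho> g j"
  have "g (cls n \<rho> i) = g (cls n \<rho> j)" using cls_gt[OF i] cls_gt[OF j] eq by simp
  then have c: "cls n \<rho> i = cls n \<rho> j"
    using g_bij ClsI i j by (metis bij_betw_def inj_onD)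
  let ?L = "sorted_list_of_set (g (cls n \<rho> j))"
  have fin: "finite (g (cls n \<rho> j))" using g_Cls[OF ClsI[OF j]] by (auto elim: ClsE)
  have "?L ! card {t \<in> cls n \<rho> j. t < i} = ?L ! card {t \<in> cls n \<rho> j. t < j}"
    using eq c unfolding gtilde_def by simp
  moreover have "card {t \<in> cls n \<rho> j. t < i} < length ?L"
    using rank_lt[OF i] g_card[OF ClsI[OF j]] c by simp
  moreover have "card {t \<in> cls n \<rho> j. t < j} < length ?L"
    using rank_lt[OF j] g_card[OF ClsI[OF j]] by simp
  ultimately have ceq: "card {t \<in> cls n \<rho> j. t < i} = card {t \<in> cls n \<rho> j. t < j}"
    using distinct_sorted_list_of_set nth_eq_iff_index_eq by blast
  have iin: "i \<in> cls n \<rho> j" using c cls_self[OF i] by simp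
  have jin: "j \<in> cls n \<rho> j" using cls_self[OF j] by simp
  show "i = j"
  proof (rule ccontr)
    assume "i \<noteq> j"
    then consider "i < j" | "j < i" by linarith
    then show False
    proof cases
      case 1
      have "card {t \<in> cls n \<rho> j. t < i} < card {t \<in> cls n \<rho> j. t < j}"
        by (rule psubset_card_mono) (use 1 iin in auto)
      then show False using ceq by simp
    next
      case 2
      have "card {t \<in> cls n \<rho> j. t < j} < card {t \<in> cls n \<rho> j. t < i}"
        by (rule psubset_card_mono) (use 2 jin in auto)
      then show False using ceq by simp
    qed
  qed
qed

lemma gt_bij: "bij_betw (gtilde n \<rho> g) (idx n) (idx n)"
proof -
  have "gtilde n \<rho> g ` idx n \<subseteq> idx n" using gt_idx by blast
  moreover have "card (gtilde n \<rho> g ` idx n) = card (idx n)" using gt_inj card_image by blast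
  ultimately have "gtilde n \<rho> g ` idx n = idx n" by (simp add: card_subset_eq)
  then show ?thesis using gt_inj by (simp add: bij_betw_def)
qed

lemma gt_rho: "i \<in> idx n \<Longrightarrow> j \<in> idx n \<Longrightarrow> \<rho> (gtilde n \<rho> g i) (gtilde n \<rho> g j) \<longleftrightarrow> \<rho> i j"
  using g_cle[OF ClsI ClsI] cls_gt cle_cls gt_idx by metis

end
end



context bfam begin

lemma chb:
  assumes PQ: "\<And>i r. i \<in> idx n \<Longrightarrow> r \<in> idx n \<Longrightarrow> (\<Sum>j\<in>idx n. P i j * Q j r) = (if i = r then 1 else 0)"
    and QP: "\<And>j k. j \<in> idx n \<Longrightarrow> k \<in> idx n \<Longrightarrow> (\<Sum>i\<in>idx n. Q j i * P i k) = (if j = k then 1 else 0)"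
    and w: "\<And>j. j \<in> idx n \<Longrightarrow> w j = (\<Sum>i\<in>idx n. scale (P i j) (u i))"
  shows "is_basis_fam scale n w" and "x = (\<Sum>j\<in>idx n. scale (\<Sum>i\<in>idx n. Q j i * crd x i) (w j))"
proof -
  have cw: "crd (w j) i = P i j" if "i \<in> idx n" "j \<in> idx n" for i j
    using that by (simp add: w crd_lin)
  have ex: "y = (\<Sum>j\<in>idx n. scale (\<Sum>i\<in>idx n. Q j i * crd y i) (w j))" for y
  proof (rule crd_eqI)
    fix k assume k: "k \<in> idx n"
    have "crd (\<Sum>j\<in>idx n. scale (\<Sum>i\<in>idx n. Q j i * crd y i) (w j)) k
        = (\<Sum>j\<in>idx n. (\<Sum>i\<in>idx n. Q j i * crd y i) * P k j)"
      using k by (simp add: crd_sum crd_scale cw cong: sum.cong)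
    also have "\<dots> = (\<Sum>j\<in>idx n. \<Sum>i\<in>idx n. P k j * Q j i * crd y i)"
      by (simp add: sum_distrib_right sum_distrib_left mult.commute mult.left_commute)
    also have "\<dots> = (\<Sum>i\<in>idx n. \<Sum>j\<in>idx n. P k j * Q j i * crd y i)"
      by (rule sum.swap)
    also have "\<dots> = (\<Sum>i\<in>idx n. (\<Sum>j\<in>idx n. P k j * Q j i) * crd y i)"
      by (simp add: sum_distrib_right)
    also have "\<dots> = (\<Sum>i\<in>idx n. (if k = i then 1 else 0) * crd y i)"
      using k by (intro sum.cong refl) (simp add: PQ)
    also have "\<dots> = crd y k" using k by (simp add: if_distrib[of "\<lambda>z. z * _"] cong: if_cong)
    finally show "crd y k = crd (\<Sum>j\<in>idx n. scale (\<Sum>i\<in>idx n. Q j i * crd y i) (w j)) k" by simp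
  qed
  then show "x = (\<Sum>j\<in>idx n. scale (\<Sum>i\<in>idx n. Q j i * crd x i) (w j))" .
  have inj: "inj_on w (idx n)"
  proof (rule inj_onI)
    fix j k assume j: "j \<in> idx n" and k: "k \<in> idx n" and e: "w j = w k"
    have "(\<Sum>i\<in>idx n. Q j i * P i k) = (\<Sum>i\<in>idx n. Q j i * P i j)"
      using e j k by (intro sum.cong refl) (metis cw)
    then show "j = k" using QP[OF j k] QP[OF j j] by (auto split: if_splits)
  qed
  have sp: "span (w ` idx n) = UNIV"
  proof -
    have "y \<in> span (w ` idx n)" for y
      by (subst ex[of y]) (intro span_sum span_scale span_base, auto)
    then show ?thesis by auto
  qed
  have ind: "\<not> dependent (w ` idx n)"
  proof
    assume "dependent (w ` idx n)"
    then obtain c where c1: "\<exists>b\<in>w ` idx n. c b \<noteq> 0" and c2: "(\<Sum>b\<in>w ` idx n. scale (c b) b) = 0"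
      using dependent_finite[of "w ` idx n"] by auto
    have z: "(\<Sum>j\<in>idx n. scale (c (w j)) (w j)) = 0" using c2 inj by (simp add: sum.reindex)
    have zi: "(\<Sum>j\<in>idx n. P i j * c (w j)) = 0" if i: "i \<in> idx n" for i
    proof -
      have "crd (\<Sum>j\<in>idx n. scale (c (w j)) (w j)) i = 0" using z by simp
      then show ?thesis using i by (simp add: crd_sum crd_scale cw mult.commute cong: sum.cong)
    qed
    have "c (w k) = 0" if k: "k \<in> idx n" for k
    proof -
      have "c (w k) = (\<Sum>j\<in>idx n. (if k = j then 1 else 0) * c (w j))"
        using k by (simp add: if_distrib[of "\<lambda>z. z * _"] cong: if_cong)
      also have "\<dots> = (\<Sum>j\<in>idx n. (\<Sum>i\<in>idx n. Q k i * P i j) * c (w j))"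
        using k by (intro sum.cong refl) (simp add: QP)
      also have "\<dots> = (\<Sum>j\<in>idx n. \<Sum>i\<in>idx n. Q k i * P i j * c (w j))"
        by (simp add: sum_distrib_right)
      also have "\<dots> = (\<Sum>i\<in>idx n. \<Sum>j\<in>idx n. Q k i * P i j * c (w j))"
        by (rule sum.swap)
      also have "\<dots> = (\<Sum>i\<in>idx n. Q k i * (\<Sum>j\<in>idx n. P i j * c (w j)))"
        by (simp add: sum_distrib_left mult.assoc)
      also have "\<dots> = 0" by (simp add: zi)
      finally show ?thesis .
    qed
    then show False using c1 by auto
  qed
  show "is_basis_fam scale n w" using inj sp ind by (simp add: is_basis_fam_def)
qed

end

context pre begin

lemma cle_trans: "\<alpha> \<in> Cls n \<rho> \<Longrightarrow> \<beta> \<in> Cls n \<rho> \<Longrightarrow> \<gamma> \<in> Cls n \<rho> \<Longrightarrow> cle \<rho> \<alpha> \<beta> \<Longrightarrow> cle \<rho> \<beta> \<gamma> \<Longrightarrow> cle \<rho> \<alpha> \<gamma>"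
  by (elim ClsE) (simp add: cle_cls, meson rtrans)

lemma std_char:
  assumes b: "bfam sc n u" and af: "adapted_flag sc n \<rho> Vf u"
  shows "f \<in> EndF sc n \<rho> Vf \<longleftrightarrow> Vector_Spaces.linear sc sc f \<and>
     (\<forall>r\<in>idx n. \<forall>t\<in>idx n. bfam.matu sc n u f r t \<noteq> 0 \<longrightarrow> \<rho> r t)"
proof (rule bfam.endF_char[OF b, where P="\<lambda>\<beta> r. cle \<rho> (cls n \<rho> r) \<beta>"])
  show "\<forall>\<beta>\<in>Cls n \<rho>. Vf \<beta> = module.span sc (u ` {r \<in> idx n. cle \<rho> (cls n \<rho> r) \<beta>})"
    using af by (simp add: adapted_flag_def)
  show "\<forall>s\<in>idx n. \<exists>\<beta>\<in>Cls n \<rho>. \<forall>r\<in>idx n. cle \<rho> (cls n \<rho> r) \<beta> = \<rho> r s"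
    using ClsI cle_cls by blast
  show "\<forall>\<beta>\<in>Cls n \<rho>. \<forall>r\<in>idx n. \<forall>s\<in>idx n. cle \<rho> (cls n \<rho> s) \<beta> \<longrightarrow> \<rho> r s \<longrightarrow> cle \<rho> (cls n \<rho> r) \<beta>"
  proof (intro ballI impI)
    fix \<beta> r s assume b: "\<beta> \<in> Cls n \<rho>" and r: "r \<in> idx n" and s: "s \<in> idx n"
      and h1: "cle \<rho> (cls n \<rho> s) \<beta>" and h2: "\<rho> r s"
    show "cle \<rho> (cls n \<rho> r) \<beta>"
      using cle_trans[OF ClsI[OF r] ClsI[OF s] b] h1 h2 cle_cls[OF r s] by blast
  qed
  show "\<forall>s\<in>idx n. \<rho> s s" using rrefl by blast
qed

lemma lev_char:
  assumes b: "bfam sc n u" and gA: "g \<in> Aut0 n \<rho>"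
    and lv: "\<forall>\<beta>\<in>Cls n \<rho>. Vf \<beta> = module.span sc (u ` {r\<in>idx n. cle \<rho> (g (cls n \<rho> r)) \<beta>})"
  shows "f \<in> EndF sc n \<rho> Vf \<longleftrightarrow> Vector_Spaces.linear sc sc f \<and>
     (\<forall>r\<in>idx n. \<forall>t\<in>idx n. bfam.matu sc n u f r t \<noteq> 0 \<longrightarrow> \<rho> r t)"
proof (rule bfam.endF_char[OF b, where P="\<lambda>\<beta> r. cle \<rho> (g (cls n \<rho> r)) \<beta>"])
  show "\<forall>\<beta>\<in>Cls n \<rho>. Vf \<beta> = module.span sc (u ` {r \<in> idx n. cle \<rho> (g (cls n \<rho> r)) \<beta>})"
    using lv by simp
  show "\<forall>s\<in>idx n. \<exists>\<beta>\<in>Cls n \<rho>. \<forall>r\<in>idx n. cle \<rho> (g (cls n \<rho> r)) \<beta> = \<rho> r s"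
  proof
    fix s assume s: "s \<in> idx n"
    show "\<exists>\<beta>\<in>Cls n \<rho>. \<forall>r\<in>idx n. cle \<rho> (g (cls n \<rho> r)) \<beta> = \<rho> r s"
    proof (intro bexI ballI)
      fix r assume r: "r \<in> idx n"
      show "cle \<rho> (g (cls n \<rho> r)) (g (cls n \<rho> s)) = \<rho> r s"
        using g_cle[OF gA ClsI[OF r] ClsI[OF s]] cle_cls[OF r s] by simp
    qed (rule g_Cls[OF gA ClsI[OF s]])
  qed
  show "\<forall>\<beta>\<in>Cls n \<rho>. \<forall>r\<in>idx n. \<forall>s\<in>idx n. cle \<rho> (g (cls n \<rho> s)) \<beta> \<longrightarrow> \<rho> r s \<longrightarrow> cle \<rho> (g (cls n \<rho> r)) \<beta>"
  proof (intro ballI impI)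
    fix \<beta> r s assume b: "\<beta> \<in> Cls n \<rho>" and r: "r \<in> idx n" and s: "s \<in> idx n"
      and h1: "cle \<rho> (g (cls n \<rho> s)) \<beta>" and h2: "\<rho> r s"
    have "cle \<rho> (g (cls n \<rho> r)) (g (cls n \<rho> s))"
      using g_cle[OF gA ClsI[OF r] ClsI[OF s]] cle_cls[OF r s] h2 by simp
    then show "cle \<rho> (g (cls n \<rho> r)) \<beta>"
      using cle_trans[OF g_Cls[OF gA ClsI[OF r]] g_Cls[OF gA ClsI[OF s]] b] h1 by blast
  qed
  show "\<forall>s\<in>idx n. \<rho> s s" using rrefl by blast
qed

end



definition had :: "(nat \<Rightarrow> nat \<Rightarrow> 'k::field) \<Rightarrow> (nat \<Rightarrow> nat \<Rightarrow> 'k) \<Rightarrow> nat \<Rightarrow> nat \<Rightarrow> 'k" where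
  "had a M = (\<lambda>i j. a i j * M i j)"

locale flsetup = pre n \<rho> for n \<rho> +
  fixes s :: "'k::field \<Rightarrow> 'v::ab_group_add \<Rightarrow> 'v" and s' :: "'k \<Rightarrow> 'w::ab_group_add \<Rightarrow> 'w"
    and Vf :: "nat set \<Rightarrow> 'v set" and Vf' :: "nat set \<Rightarrow> 'w set"
    and v :: "nat \<Rightarrow> 'v" and v' :: "nat \<Rightarrow> 'w"
  assumes vs: "vector_space s" and vs': "vector_space s'"
    and af: "adapted_flag s n \<rho> Vf v" and af': "adapted_flag s' n \<rho> Vf' v'"
begin

lemma bV: "bfam s n v" using vs af by (simp add: bfam_def bfam_axioms_def adapted_flag_def)
lemma bU: "bfam s' n v'" using vs' af' by (simp add: bfam_def bfam_axioms_def adapted_flag_def)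

sublocale V: bfam s n v by (rule bV)
sublocale U: bfam s' n v' by (rule bU)

lemma E_char: "f \<in> EndF s n \<rho> Vf \<longleftrightarrow> Vector_Spaces.linear s s f \<and>
     (\<forall>r\<in>idx n. \<forall>t\<in>idx n. V.matu f r t \<noteq> 0 \<longrightarrow> \<rho> r t)"
  by (rule std_char[OF bV af])

lemma E'_char: "f \<in> EndF s' n \<rho> Vf' \<longleftrightarrow> Vector_Spaces.linear s' s' f \<and>
     (\<forall>r\<in>idx n. \<forall>t\<in>idx n. U.matu f r t \<noteq> 0 \<longrightarrow> \<rho> r t)"
  by (rule std_char[OF bU af'])

end

locale trip = flsetup +
  fixes A :: "nat \<Rightarrow> nat \<Rightarrow> 'a" and g :: "nat set \<Rightarrow> nat set" and a :: "nat \<Rightarrow> nat \<Rightarrow> 'a"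
  assumes T: "(A, g, a) \<in> Triples n \<rho>"
begin

lemma AU: "A \<in> Umat n \<rho>" and gA: "g \<in> Aut0 n \<rho>" and aT: "a \<in> Tfam n \<rho>"
  using T by (auto simp: Triples_def)

abbreviation gt where "gt \<equiv> gtilde n \<rho> g"

lemma Binv: obtains B where "B \<in> Mrho n \<rho>" "matmul n A B = matone n" "matmul n B A = matone n"
  using AU by (auto simp: Umat_def)

lemma w_def': "j \<in> idx n \<Longrightarrow> wvec s' n \<rho> v' A g j = (\<Sum>i\<in>idx n. s' (A i (gt j)) (v' i))"
  by (simp add: wvec_def matg_def)

lemma A_supp: "A i t \<noteq> 0 \<Longrightarrow> i \<in> idx n \<and> t \<in> idx n \<and> \<rho> i t"
  using AU by (auto simp: Umat_def Mrho_def)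

lemma PQ_QP:
  assumes B: "B \<in> Mrho n \<rho>" "matmul n A B = matone n" "matmul n B A = matone n"
  shows "\<And>i r. i \<in> idx n \<Longrightarrow> r \<in> idx n \<Longrightarrow> (\<Sum>j\<in>idx n. A i (gt j) * B (gt j) r) = (if i = r then 1 else 0)"
    and "\<And>j k. j \<in> idx n \<Longrightarrow> k \<in> idx n \<Longrightarrow> (\<Sum>i\<in>idx n. B (gt j) i * A i (gt k)) = (if j = k then 1 else 0)"
proof -
  fix i r assume i: "i \<in> idx n" and r: "r \<in> idx n"
  have "(\<Sum>j\<in>idx n. A i (gt j) * B (gt j) r) = (\<Sum>t\<in>idx n. A i t * B t r)"
    using sum.reindex_bij_betw[OF gt_bij[OF gA], of "\<lambda>t. A i t * B t r"] by simp
  also have "\<dots> = matmul n A B i r" by (simp add: matmul_def)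
  finally show "(\<Sum>j\<in>idx n. A i (gt j) * B (gt j) r) = (if i = r then 1 else 0)"
    using B i by (simp add: matone_def)
next
  fix j k assume j: "j \<in> idx n" and k: "k \<in> idx n"
  have "(\<Sum>i\<in>idx n. B (gt j) i * A i (gt k)) = matmul n B A (gt j) (gt k)" by (simp add: matmul_def)
  also have "\<dots> = (if gt j = gt k then 1 else 0)" using B gt_idx[OF gA j] by (simp add: matone_def)
  also have "\<dots> = (if j = k then 1 else 0)" using gt_inj[OF gA] j k by (auto simp: inj_on_def)
  finally show "(\<Sum>i\<in>idx n. B (gt j) i * A i (gt k)) = (if j = k then 1 else 0)" .
qed

lemma w_basis: "is_basis_fam s' n (wvec s' n \<rho> v' A g)"
proof -
  obtain B where B: "B \<in> Mrho n \<rho>" "matmul n A B = matone n" "matmul n B A = matone n" by (rule Binv)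
  show ?thesis
    by (rule U.chb(1)[where P="\<lambda>i j. A i (gt j)" and Q="\<lambda>j i. B (gt j) i"])
      (use PQ_QP[OF B] w_def' in auto)
qed

sublocale W: bfam s' n "wvec s' n \<rho> v' A g" using vs' w_basis by (simp add: bfam_def bfam_axioms_def)

abbreviation w where "w \<equiv> wvec s' n \<rho> v' A g"

lemma Wcrd:
  assumes B: "B \<in> Mrho n \<rho>" "matmul n A B = matone n" "matmul n B A = matone n"
    and j: "j \<in> idx n"
  shows "W.crd x j = (\<Sum>i\<in>idx n. B (gt j) i * U.crd x i)"
proof -
  have "x = (\<Sum>j\<in>idx n. s' (\<Sum>i\<in>idx n. B (gt j) i * U.crd x i) (w j))"
    by (rule U.chb(2)[where P="\<lambda>i j. A i (gt j)" and Q="\<lambda>j i. B (gt j) i"])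
      (use PQ_QP[OF B] w_def' in auto)
  then have "W.crd x j = W.crd (\<Sum>j\<in>idx n. s' (\<Sum>i\<in>idx n. B (gt j) i * U.crd x i) (w j)) j" by simp
  also have "\<dots> = (\<Sum>i\<in>idx n. B (gt j) i * U.crd x i)" using j by (rule W.crd_lin)
  finally show ?thesis .
qed

lemma Ucrd_w: "i \<in> idx n \<Longrightarrow> j \<in> idx n \<Longrightarrow> U.crd (w j) i = A i (gt j)"
  by (simp add: w_def' U.crd_lin)

lemma w_level: "\<forall>\<beta>\<in>Cls n \<rho>. Vf' \<beta> = U.span (w ` {j\<in>idx n. cle \<rho> (g (cls n \<rho> j)) \<beta>})"
proof
  fix \<beta> assume b: "\<beta> \<in> Cls n \<rho>"
  obtain B where B: "B \<in> Mrho n \<rho>" "matmul n A B = matone n" "matmul n B A = matone n" by (rule Binv)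
  let ?D = "{r\<in>idx n. cle \<rho> (cls n \<rho> r) \<beta>}"
  let ?S = "{j\<in>idx n. cle \<rho> (g (cls n \<rho> j)) \<beta>}"
  have Vb: "Vf' \<beta> = U.span (v' ` ?D)" using af' b by (simp add: adapted_flag_def)
  have "w j \<in> U.span (v' ` ?D)" if j: "j \<in> ?S" for j
  proof -
    have "U.crd (w j) i = 0" if i: "i \<in> idx n - ?D" for i
    proof (rule ccontr)
      assume "U.crd (w j) i \<noteq> 0"
      then have "A i (gt j) \<noteq> 0" using i j Ucrd_w by auto
      then have "\<rho> i (gt j)" using A_supp by blast
      then have "cle \<rho> (cls n \<rho> i) (g (cls n \<rho> j))"
        using cle_cls[of i "gt j"] cls_gt[OF gA] i j gt_idx[OF gA] by auto
      then have "cle \<rho> (cls n \<rho> i) \<beta>"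
        using cle_trans[OF ClsI g_Cls[OF gA ClsI] b] i j by blast
      then show False using i by auto
    qed
    then show ?thesis using U.in_span_iff[of ?D] by auto
  qed
  then have 1: "U.span (w ` ?S) \<subseteq> U.span (v' ` ?D)"
    by (intro U.span_minimal) (auto simp: U.subspace_span)
  have "v' r \<in> U.span (w ` ?S)" if r: "r \<in> ?D" for r
  proof -
    have "W.crd (v' r) j = 0" if j: "j \<in> idx n - ?S" for j
    proof (rule ccontr)
      assume "W.crd (v' r) j \<noteq> 0"
      then have "B (gt j) r \<noteq> 0" using Wcrd[OF B, of j "v' r"] j r by (simp add: U.crd_basis if_distrib[of "\<lambda>z. _ * z"] cong: if_cong)
      then have "\<rho> (gt j) r" using B(1) by (auto simp: Mrho_def)
      then have "cle \<rho> (g (cls n \<rho> j)) (cls n \<rho> r)"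
        using cle_cls[of "gt j" r] cls_gt[OF gA] r j gt_idx[OF gA] by auto
      then have "cle \<rho> (g (cls n \<rho> j)) \<beta>"
        using cle_trans[OF g_Cls[OF gA ClsI] ClsI b] r j by blast
      then show False using j by auto
    qed
    then show ?thesis using W.in_span_iff[of ?S] by auto
  qed
  then have 2: "U.span (v' ` ?D) \<subseteq> U.span (w ` ?S)"
    by (intro U.span_minimal) (auto simp: U.subspace_span)
  show "Vf' \<beta> = U.span (w ` ?S)" using 1 2 Vb by auto
qed

lemma E'_char_w: "f \<in> EndF s' n \<rho> Vf' \<longleftrightarrow> Vector_Spaces.linear s' s' f \<and>
     (\<forall>r\<in>idx n. \<forall>t\<in>idx n. W.matu f r t \<noteq> 0 \<longrightarrow> \<rho> r t)"
  by (rule lev_char[OF _ gA w_level]) (unfold_locales)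

lemma Fij_eq: "Fij s' n \<rho> v' A g a i j x = s' (W.crd x j * a i j) (w i)"
  by (simp add: Fij_def W.crd_def)

lemma a_supp: "a i j \<noteq> 0 \<Longrightarrow> i \<in> idx n \<and> j \<in> idx n \<and> \<rho> i j"
  using aT by (auto simp: Tfam_def)

lemma Fmap_eq: assumes f: "f \<in> EndF s n \<rho> Vf"
  shows "Fmap s s' n \<rho> Vf v v' (A, g, a) f = W.linop (had a (V.matu f))"
proof
  fix x
  let ?P = "{(i, j). i \<in> idx n \<and> j \<in> idx n \<and> \<rho> i j}"
  let ?h = "\<lambda>i j. s' (V.matu f i j) (s' (W.crd x j * a i j) (w i))"
  have "Fmap s s' n \<rho> Vf v v' (A, g, a) f x = (\<Sum>(i, j)\<in>?P. ?h i j)"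
    using f by (auto simp: Fmap_def Fij_eq coordE_def V.matu_def V.crd_def intro!: sum.cong)
  also have "\<dots> = (\<Sum>(i, j)\<in>idx n \<times> idx n. ?h i j)"
    by (rule sum.mono_neutral_left) (auto dest: a_supp)
  also have "\<dots> = (\<Sum>i\<in>idx n. \<Sum>j\<in>idx n. ?h i j)"
    by (simp add: sum.cartesian_product)
  also have "\<dots> = W.linop (had a (V.matu f)) x"
    unfolding W.linop_def had_def
    by (simp add: U.scale_sum_left mult.commute mult.left_commute mult.assoc)
  finally show "Fmap s s' n \<rho> Vf v v' (A, g, a) f x = W.linop (had a (V.matu f)) x" .
qed

end



lemma had_mul:
  assumes a: "a \<in> Tfam n \<rho>" and M: "M \<in> Mrho n \<rho>" and N: "N \<in> Mrho n \<rho>"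
  shows "had a (matmul n M N) = matmul n (had a M) (had a N)"
proof (intro ext)
  fix i k
  have *: "a i k * (M i t * N t k) = (a i t * M i t) * (a t k * N t k)" if t: "t \<in> idx n" for t
  proof (cases "M i t * N t k = 0")
    case True then show ?thesis by auto
  next
    case False
    then have "i \<in> idx n" "t \<in> idx n" "k \<in> idx n" "\<rho> i t" "\<rho> t k"
      using M N by (auto simp: Mrho_def)
    then have "a i t * a t k = a i k" using a by (auto simp: Tfam_def)
    then show ?thesis by (simp add: algebra_simps)
  qed
  have "(\<Sum>t\<in>idx n. a i k * (M i t * N t k)) = (\<Sum>t\<in>idx n. (a i t * M i t) * (a t k * N t k))"
    by (rule sum.cong) (use * in auto)
  then show "had a (matmul n M N) i k = matmul n (had a M) (had a N) i k"
    by (simp add: had_def matmul_def sum_distrib_left)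
qed

lemma had_one: assumes a: "a \<in> Tfam n \<rho>" and rf: "\<And>i. i \<in> idx n \<Longrightarrow> \<rho> i i" shows "had a (matone n) = matone n"
proof (intro ext)
  fix i j
  have "a i i = 1" if "i \<in> idx n"
  proof -
    have "a i i \<noteq> 0" "\<rho> i i" using a that rf by (auto simp: Tfam_def)
    moreover have "\<rho> i i \<Longrightarrow> a i i * a i i = a i i" using a that by (auto simp: Tfam_def)
    ultimately show ?thesis by simp
  qed
  then show "had a (matone n) i j = matone n i j" by (auto simp: had_def matone_def)
qed

definition ainv :: "(nat \<Rightarrow> nat \<Rightarrow> 'k::field) \<Rightarrow> nat \<Rightarrow> nat \<Rightarrow> 'k" where
  "ainv a = (\<lambda>i j. inverse (a i j))"

lemma had_Mrho: "a \<in> Tfam n \<rho> \<Longrightarrow> had a M \<in> Mrho n \<rho>"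
  by (auto simp: had_def Mrho_def Tfam_def)

lemma had_inv_Mrho: "a \<in> Tfam n \<rho> \<Longrightarrow> had (ainv a) M \<in> Mrho n \<rho>"
  by (auto simp: had_def Mrho_def Tfam_def ainv_def)

lemma had_inv1: "a \<in> Tfam n \<rho> \<Longrightarrow> M \<in> Mrho n \<rho> \<Longrightarrow> had (ainv a) (had a M) = M"
  by (force simp: had_def Mrho_def Tfam_def ainv_def fun_eq_iff)

lemma had_inv2: "a \<in> Tfam n \<rho> \<Longrightarrow> M \<in> Mrho n \<rho> \<Longrightarrow> had a (had (ainv a) M) = M"
  by (force simp: had_def Mrho_def Tfam_def ainv_def fun_eq_iff)

context bfam begin

lemma matu_compE:
  assumes "Vector_Spaces.linear scale scale f" "Vector_Spaces.linear scale scale g"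
  shows "matu (f \<circ> g) = matmul n (matu f) (matu g)"
proof (intro ext)
  fix i j show "matu (f \<circ> g) i j = matmul n (matu f) (matu g) i j"
  proof (cases "i \<in> idx n \<and> j \<in> idx n")
    case True then show ?thesis by (simp add: matu_comp[OF assms] matmul_def)
  next
    case False then show ?thesis by (auto simp: matu_out matmul_def)
  qed
qed

lemma Mrho_char:
  assumes "\<forall>r\<in>idx n. \<forall>t\<in>idx n. matu f r t \<noteq> 0 \<longrightarrow> \<rho> r t"
  shows "matu f \<in> Mrho n \<rho>"
  using assms by (auto simp: Mrho_def matu_def split: if_splits)

lemma matu_linop_Mrho: assumes "M \<in> Mrho n \<rho>" shows "matu (linop M) = M"
proof (intro ext)
  fix i j show "matu (linop M) i j = M i j"
    using assms by (cases "i \<in> idx n \<and> j \<in> idx n") (auto simp: matu_linop matu_out Mrho_def)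
qed

end

context flsetup begin

abbreviation EE where "EE \<equiv> EndF s n \<rho> Vf"
abbreviation EE' where "EE' \<equiv> EndF s' n \<rho> Vf'"

lemma E_lin: "f \<in> EE \<Longrightarrow> Vector_Spaces.linear s s f" using E_char by blast

lemma E_Mrho: "f \<in> EE \<Longrightarrow> V.matu f \<in> Mrho n \<rho>"
  using E_char V.Mrho_char by blast

lemma linop_E: "M \<in> Mrho n \<rho> \<Longrightarrow> V.linop M \<in> EE"
  unfolding E_char using V.linop_linear V.matu_linop by (auto simp: Mrho_def)

lemma E_add: assumes "f \<in> EE" "f2 \<in> EE" shows "(\<lambda>x. f x + f2 x) \<in> EE"
proof -
  have l: "Vector_Spaces.linear s s f" "Vector_Spaces.linear s s f2" using assms E_lin by auto
  have "Vector_Spaces.linear s s (\<lambda>x. f x + f2 x)"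
    using l by (simp add: Vector_Spaces.linear_iff V.scale_right_distrib add_ac)
  moreover have "\<rho> r t" if "r \<in> idx n" "t \<in> idx n" "V.matu (\<lambda>x. f x + f2 x) r t \<noteq> 0" for r t
  proof -
    have "V.matu f r t \<noteq> 0 \<or> V.matu f2 r t \<noteq> 0" using that(3) by (auto simp: V.matu_add)
    then show ?thesis using assms that E_char by blast
  qed
  ultimately show ?thesis unfolding E_char by blast
qed

lemma E_scale: "f \<in> EE \<Longrightarrow> (\<lambda>x. s c (f x)) \<in> EE"
  unfolding E_char
  by (auto simp: V.matu_scale Vector_Spaces.linear_iff V.scale_left_commute V.scale_right_distrib)

lemma E_comp: assumes "f \<in> EE" "f2 \<in> EE" shows "f \<circ> f2 \<in> EE"
proof -
  have l: "Vector_Spaces.linear s s f" "Vector_Spaces.linear s s f2" using assms E_lin by auto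
  have "\<rho> r t" if r: "r \<in> idx n" and t: "t \<in> idx n" and nz: "V.matu (f \<circ> f2) r t \<noteq> 0" for r t
  proof -
    obtain k where k: "k \<in> idx n" "V.matu f r k * V.matu f2 k t \<noteq> 0"
      using nz V.matu_comp[OF l r t] by (metis (no_types, lifting) sum.neutral)
    then have "\<rho> r k" "\<rho> k t" using assms r t E_char by auto
    then show ?thesis using rtrans r t k by blast
  qed
  moreover have "Vector_Spaces.linear s s (f \<circ> f2)" using l Vector_Spaces.linear_compose by blast
  ultimately show ?thesis unfolding E_char by blast
qed

lemma E_id: "id \<in> EE"
  unfolding E_char using V.linear_id by (auto simp: V.matu_id matone_def rrefl)

end

context trip begin

lemma E'_lin: "f \<in> EE' \<Longrightarrow> Vector_Spaces.linear s' s' f" using E'_char_w by blast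

lemma E'_Mrho: "f \<in> EE' \<Longrightarrow> W.matu f \<in> Mrho n \<rho>"
  using E'_char_w W.Mrho_char by blast

lemma linop_E': "M \<in> Mrho n \<rho> \<Longrightarrow> W.linop M \<in> EE'"
  unfolding E'_char_w using W.linop_linear W.matu_linop by (auto simp: Mrho_def)

abbreviation Phi where "Phi \<equiv> Fmap s s' n \<rho> Vf v v' (A, g, a)"

lemma Phi_ext: "Phi \<in> extensional EE" by (simp add: Fmap_def)

lemma Phi_iso: "Phi \<in> Iso_alg s s' EE EE'"
proof -
  have Pf: "Phi f = W.linop (had a (V.matu f))" if "f \<in> EE" for f using Fmap_eq that .
  have into: "Phi f \<in> EE'" if "f \<in> EE" for f
    using Pf[OF that] linop_E' had_Mrho[OF aT] by simp
  have inj: "inj_on Phi EE"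
  proof (rule inj_onI)
    fix f f2 assume f: "f \<in> EE" and f2: "f2 \<in> EE" and e: "Phi f = Phi f2"
    have "had a (V.matu f) = had a (V.matu f2)"
      using e Pf[OF f] Pf[OF f2] W.matu_linop_Mrho had_Mrho[OF aT] by metis
    then have "V.matu f = V.matu f2" using had_inv1[OF aT] E_Mrho f f2 by metis
    then show "f = f2" using V.linop_matu E_lin f f2 by metis
  qed
  have surj: "Phi ` EE = EE'"
  proof
    show "Phi ` EE \<subseteq> EE'" using into by blast
    show "EE' \<subseteq> Phi ` EE"
    proof
      fix f' assume f': "f' \<in> EE'"
      let ?M = "had (ainv a) (W.matu f')"
      have M: "?M \<in> Mrho n \<rho>" using had_inv_Mrho[OF aT] .
      have fE: "V.linop ?M \<in> EE" using linop_E[OF M] .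
      have "Phi (V.linop ?M) = W.linop (had a ?M)" using Pf[OF fE] V.matu_linop_Mrho[OF M] by simp
      also have "\<dots> = W.linop (W.matu f')" using had_inv2[OF aT E'_Mrho[OF f']] by simp
      also have "\<dots> = f'" using W.linop_matu E'_lin f' by blast
      finally show "f' \<in> Phi ` EE" using fE by (metis image_eqI)
    qed
  qed
  have add: "Phi (\<lambda>x. f x + f2 x) = (\<lambda>y. Phi f y + Phi f2 y)" if f: "f \<in> EE" and f2: "f2 \<in> EE" for f f2
  proof -
    have "Phi (\<lambda>x. f x + f2 x) = W.linop (had a (V.matu (\<lambda>x. f x + f2 x)))" using Pf E_add f f2 by blast
    also have "had a (V.matu (\<lambda>x. f x + f2 x)) = (\<lambda>i j. had a (V.matu f) i j + had a (V.matu f2) i j)"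
      by (simp add: had_def V.matu_add distrib_left)
    finally show ?thesis using Pf f f2 by (simp add: W.linop_add)
  qed
  have scl: "Phi (\<lambda>x. s c (f x)) = (\<lambda>y. s' c (Phi f y))" if f: "f \<in> EE" for f c
  proof -
    have "Phi (\<lambda>x. s c (f x)) = W.linop (had a (V.matu (\<lambda>x. s c (f x))))" using Pf E_scale f by blast
    also have "had a (V.matu (\<lambda>x. s c (f x))) = (\<lambda>i j. c * had a (V.matu f) i j)"
      by (simp add: had_def V.matu_scale mult.left_commute)
    finally show ?thesis using Pf f by (simp add: W.linop_scale)
  qed
  have mul: "Phi (f \<circ> f2) = Phi f \<circ> Phi f2" if f: "f \<in> EE" and f2: "f2 \<in> EE" for f f2
  proof -
    have "Phi (f \<circ> f2) = W.linop (had a (V.matu (f \<circ> f2)))" using Pf E_comp f f2 by blast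
    also have "V.matu (f \<circ> f2) = matmul n (V.matu f) (V.matu f2)"
      using V.matu_compE E_lin f f2 by blast
    also have "had a \<dots> = matmul n (had a (V.matu f)) (had a (V.matu f2))"
      using had_mul[OF aT E_Mrho[OF f] E_Mrho[OF f2]] .
    finally show ?thesis using Pf f f2 by (simp add: W.linop_mul o_def)
  qed
  have one: "Phi id = id"
  proof -
    have "Phi id = W.linop (had a (V.matu id))" using Pf E_id by blast
    then show ?thesis by (simp add: V.matu_id had_one[OF aT rrefl] W.linop_one)
  qed
  show ?thesis unfolding Iso_alg_def
    using Phi_ext inj surj add scl mul one by (auto simp: bij_betw_def)
qed

end



definition Eu :: "nat \<Rightarrow> nat \<Rightarrow> nat \<Rightarrow> nat \<Rightarrow> 'k::field" where
  "Eu i j = (\<lambda>r t. if r = i \<and> t = j then 1 else 0)"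

context pre begin

lemma Eu_Mrho: "i \<in> idx n \<Longrightarrow> j \<in> idx n \<Longrightarrow> \<rho> i j \<Longrightarrow> Eu i j \<in> Mrho n \<rho>"
  by (auto simp: Eu_def Mrho_def)

lemma cle_refl: "\<alpha> \<in> Cls n \<rho> \<Longrightarrow> cle \<rho> \<alpha> \<alpha>"
  by (elim ClsE) (simp add: cle_cls rrefl)

lemma cle_antisym: "\<alpha> \<in> Cls n \<rho> \<Longrightarrow> \<beta> \<in> Cls n \<rho> \<Longrightarrow> cle \<rho> \<alpha> \<beta> \<Longrightarrow> cle \<rho> \<beta> \<alpha> \<Longrightarrow> \<alpha> = \<beta>"
  by (elim ClsE) (simp add: cle_cls cls_eq)

end

context bfam begin

lemma linop_Eu: "i \<in> idx n \<Longrightarrow> j \<in> idx n \<Longrightarrow> linop (had a (Eu i j)) z = scale (a i j * crd z j) (u i)"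
proof -
  assume i: "i \<in> idx n" and j: "j \<in> idx n"
  have "linop (had a (Eu i j)) z = (\<Sum>r\<in>idx n. scale (if r = i then a i j * crd z j else 0) (u r))"
    unfolding linop_def had_def Eu_def
    by (intro sum.cong refl arg_cong2[where f=scale]) (simp add: if_distrib[of "\<lambda>x. _ * x"] if_distrib[of "\<lambda>x. x * _"] j cong: if_cong)
  also have "\<dots> = scale (a i j * crd z j) (u i)"
    using i by (simp add: if_distrib[of "\<lambda>x. scale x _"] cong: if_cong)
  finally show ?thesis .
qed

end

context flsetup begin

abbreviation EE_ij where "EE_ij i j \<equiv> V.linop (Eu i j)"

lemma Eij_E: "i \<in> idx n \<Longrightarrow> j \<in> idx n \<Longrightarrow> \<rho> i j \<Longrightarrow> EE_ij i j \<in> EE"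
  using linop_E Eu_Mrho by blast

end

context trip begin

lemma Phi_E: assumes "i \<in> idx n" "j \<in> idx n" "\<rho> i j"
  shows "Phi (EE_ij i j) = (\<lambda>z. s' (a i j * W.crd z j) (w i))"
proof -
  have "Phi (EE_ij i j) = W.linop (had a (Eu i j))"
    using Fmap_eq[OF Eij_E[OF assms]] V.matu_linop_Mrho[OF Eu_Mrho[OF assms]] by simp
  then show ?thesis using W.linop_Eu assms by auto
qed

lemma a_diag: "i \<in> idx n \<Longrightarrow> a i i = 1"
proof -
  assume i: "i \<in> idx n"
  have "a i i \<noteq> 0" "a i i * a i i = a i i" using aT i rrefl by (auto simp: Tfam_def)
  then show ?thesis by simp
qed

lemma a_nz: "i \<in> idx n \<Longrightarrow> j \<in> idx n \<Longrightarrow> \<rho> i j \<Longrightarrow> a i j \<noteq> 0"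
  using aT by (auto simp: Tfam_def)

lemma w_in_Vf: assumes b: "\<beta> \<in> Cls n \<rho>" and j: "j \<in> idx n"
  shows "w j \<in> Vf' \<beta> \<longleftrightarrow> cle \<rho> (g (cls n \<rho> j)) \<beta>"
proof -
  let ?S = "{j\<in>idx n. cle \<rho> (g (cls n \<rho> j)) \<beta>}"
  have "w j \<in> Vf' \<beta> \<longleftrightarrow> (\<forall>r\<in>idx n - ?S. W.crd (w j) r = 0)"
    using w_level b W.in_span_iff[of ?S] by auto
  also have "\<dots> \<longleftrightarrow> j \<in> ?S" using j by (auto simp: W.crd_basis)
  finally show ?thesis using j by simp
qed

lemma Ucrd_w': "i \<in> idx n \<Longrightarrow> j \<in> idx n \<Longrightarrow> U.crd (w j) i = matg n \<rho> A g i j"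
  by (simp add: Ucrd_w matg_def)

end

context flsetup begin

lemma subsp_Vf': "\<beta> \<in> Cls n \<rho> \<Longrightarrow> U.subspace (Vf' \<beta>)"
  using af' by (simp add: adapted_flag_def U.subspace_span)

lemma part1:
  assumes x: "(A, g, a) \<in> Triples n \<rho>" and y: "(B, h, b) \<in> Triples n \<rho>"
  shows "Fmap s s' n \<rho> Vf v v' (A, g, a) = Fmap s s' n \<rho> Vf v v' (B, h, b) \<longleftrightarrow>
     ((A, g, a), (B, h, b)) \<in> approx_rel n \<rho>"
proof -
  interpret X: trip n \<rho> s s' Vf Vf' v v' A g a by unfold_locales (rule x)
  interpret Y: trip n \<rho> s s' Vf Vf' v v' B h b by unfold_locales (rule y)
  show ?thesis
  proof
    assume e: "X.Phi = Y.Phi"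
    have eE: "(\<lambda>z. s' (a i j * X.W.crd z j) (X.w i)) = (\<lambda>z. s' (b i j * Y.W.crd z j) (Y.w i))"
      if "i \<in> idx n" "j \<in> idx n" "\<rho> i j" for i j
      using X.Phi_E[OF that] Y.Phi_E[OF that] e by simp
    define c where "c j = Y.W.crd (X.w j) j" for j
    have wA: "X.w j = s' (c j) (Y.w j)" if j: "j \<in> idx n" for j
      using fun_cong[OF eE[OF j j rrefl[OF j]], of "X.w j"] X.a_diag[OF j] Y.a_diag[OF j] j
      by (simp add: X.W.crd_basis c_def)
    have cnz: "c j \<noteq> 0" if j: "j \<in> idx n" for j
      using wA[OF j] X.W.u_nz[OF j] by auto
    have wB: "Y.w j = s' (inverse (c j)) (X.w j)" if j: "j \<in> idx n" for j
      using wA[OF j] cnz[OF j] by simp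
    have gh: "g \<alpha> = h \<alpha>" if al: "\<alpha> \<in> Cls n \<rho>" for \<alpha>
    proof -
      obtain j where j: "j \<in> idx n" and aj: "\<alpha> = cls n \<rho> j" using al by (elim ClsE)
      have eq: "cle \<rho> (g \<alpha>) \<beta> \<longleftrightarrow> cle \<rho> (h \<alpha>) \<beta>" if b: "\<beta> \<in> Cls n \<rho>" for \<beta>
      proof -
        have "X.w j \<in> Vf' \<beta> \<longleftrightarrow> Y.w j \<in> Vf' \<beta>"
          using wA[OF j] wB[OF j] subsp_Vf'[OF b] U.subspace_scale by metis
        then show ?thesis using X.w_in_Vf[OF b j] Y.w_in_Vf[OF b j] aj by simp
      qed
      have g1: "g \<alpha> \<in> Cls n \<rho>" "h \<alpha> \<in> Cls n \<rho>" using al g_Cls X.gA Y.gA by auto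
      show ?thesis using eq[OF g1(1)] eq[OF g1(2)] cle_refl g1 cle_antisym by metis
    qed
    have geq: "g = h"
      using gh X.gA Y.gA by (auto simp: Aut0_def intro: extensionalityI)
    define d where "d j = inverse (c j)" for j
    have dnz: "\<forall>i\<in>idx n. d i \<noteq> 0" using cnz by (simp add: d_def)
    have ab: "a i j * inverse (b i j) = d i * inverse (d j)"
      if ij: "i \<in> idx n" "j \<in> idx n" "\<rho> i j" for i j
    proof -
      have "s' (a i j * X.W.crd (X.w j) j) (X.w i) = s' (b i j * Y.W.crd (X.w j) j) (Y.w i)"
        using fun_cong[OF eE[OF ij], of "X.w j"] .
      then have "s' (a i j) (X.w i) = s' (b i j * c j * inverse (c i)) (X.w i)"
        using ij wB[OF ij(1)] by (simp add: X.W.crd_basis c_def mult.assoc)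
      then have "a i j = b i j * c j * inverse (c i)" using X.W.u_nz[OF ij(1)] by simp
      then show ?thesis using Y.a_nz[OF ij] cnz ij by (simp add: d_def field_simps)
    qed
    have mB: "matg n \<rho> B g i j = matg n \<rho> A g i j * d j" if ij: "i \<in> idx n" "j \<in> idx n" for i j
    proof -
      have "matg n \<rho> B g i j = U.crd (Y.w j) i" using Y.Ucrd_w'[OF ij] geq by simp
      also have "\<dots> = inverse (c j) * U.crd (X.w j) i" using wB[OF ij(2)] by (simp add: U.crd_scale)
      also have "\<dots> = matg n \<rho> A g i j * d j" using X.Ucrd_w'[OF ij] by (simp add: d_def mult.commute)
      finally show ?thesis .
    qed
    show "((A, g, a), (B, h, b)) \<in> approx_rel n \<rho>"
      unfolding approx_rel_def using x y geq dnz ab mB by blast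
  next
    assume "((A, g, a), (B, h, b)) \<in> approx_rel n \<rho>"
    then obtain d where geq: "g = h" and dnz: "\<forall>i\<in>idx n. d i \<noteq> 0"
      and ab: "\<forall>i\<in>idx n. \<forall>j\<in>idx n. \<rho> i j \<longrightarrow> a i j * inverse (b i j) = d i * inverse (d j)"
      and mB: "\<forall>i\<in>idx n. \<forall>j\<in>idx n. matg n \<rho> B g i j = matg n \<rho> A g i j * d j"
      unfolding approx_rel_def by blast
    have wB: "Y.w j = s' (d j) (X.w j)" if j: "j \<in> idx n" for j
    proof (rule U.crd_eqI)
      fix i assume i: "i \<in> idx n"
      show "U.crd (Y.w j) i = U.crd (s' (d j) (X.w j)) i"
        using Y.Ucrd_w'[OF i j] X.Ucrd_w'[OF i j] mB i j geq by (simp add: U.crd_scale mult.commute)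
    qed
    have crdB: "Y.W.crd z j = X.W.crd z j * inverse (d j)" if j: "j \<in> idx n" for z j
    proof -
      have "z = (\<Sum>j\<in>idx n. s' (X.W.crd z j) (X.w j))" by (simp add: X.W.expand)
      also have "\<dots> = (\<Sum>j\<in>idx n. s' (X.W.crd z j * inverse (d j)) (Y.w j))"
        using dnz wB by (intro sum.cong refl) simp
      finally have "Y.W.crd z j = Y.W.crd (\<Sum>j\<in>idx n. s' (X.W.crd z j * inverse (d j)) (Y.w j)) j"
        by simp
      then show ?thesis using Y.W.crd_lin[OF j] by simp
    qed
    have Fe: "Fij s' n \<rho> v' B h b i j z = Fij s' n \<rho> v' A g a i j z"
      if ij: "i \<in> idx n" "j \<in> idx n" "\<rho> i j" for i j z
    proof -
      have e1: "a i j * inverse (b i j) = d i * inverse (d j)" using ab ij by blast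
      have bij: "b i j = a i j * d j * inverse (d i)"
        using e1 ij X.a_nz[OF ij] Y.a_nz[OF ij] dnz by (auto simp: field_simps)
      have c1: "X.W.crd z j = d j * Y.W.crd z j" using crdB[OF ij(2)] dnz ij by (simp add: field_simps)
      have c2: "d i * b i j = d j * a i j" using bij dnz ij by (simp add: field_simps)
      have "Y.W.crd z j * b i j * d i = X.W.crd z j * a i j"
        unfolding c1 using c2 by (metis mult.commute mult.left_commute)
      then show ?thesis unfolding X.Fij_eq Y.Fij_eq
        using wB[OF ij(1)] by simp
    qed
    show "X.Phi = Y.Phi"
      unfolding Fmap_def using Fe by (auto intro!: ext sum.cong simp: geq)
  qed
qed

end



context bfam begin

lemma linop_Eu1: "i \<in> idx n \<Longrightarrow> j \<in> idx n \<Longrightarrow> linop (Eu i j) z = scale (crd z j) (u i)"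
  using linop_Eu[of i j "\<lambda>_ _. 1" z] by (simp add: had_def)

lemma linop_zero: "linop (\<lambda>_ _. 0) = (\<lambda>x. 0)"
  by (simp add: linop_def fun_eq_iff)


end

lemma Eu_mul: "j \<in> idx n \<Longrightarrow> matmul n (Eu i j) (Eu k l) = (if j = k then Eu i l else (\<lambda>_ _. 0))"
  by (auto simp: matmul_def Eu_def fun_eq_iff if_distrib[of "\<lambda>x. x * _"] cong: if_cong)

lemma Eu_sand: "i \<in> idx n \<Longrightarrow> j \<in> idx n \<Longrightarrow>
  matmul n (Eu i i) (matmul n M (Eu j j)) = (\<lambda>r c. M i j * Eu i j r c)"
  by (auto simp: matmul_def Eu_def fun_eq_iff if_distrib[of "\<lambda>x. x * _"] if_distrib[of "\<lambda>x. _ * x"] cong: if_cong)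

context flsetup begin

abbreviation PP where "PP \<equiv> {(i, j). i \<in> idx n \<and> j \<in> idx n \<and> \<rho> i j}"

lemma finPP: "finite PP"
  by (rule finite_subset[of _ "idx n \<times> idx n"]) auto

lemma zero_E: "(\<lambda>x. 0) \<in> EE"
  unfolding E_char by (simp add: Vector_Spaces.linear_iff V.matu_def vs)

lemma EE_mul: "j \<in> idx n \<Longrightarrow> EE_ij i j \<circ> EE_ij k l = (if j = k then EE_ij i l else (\<lambda>x. 0))"
  by (simp add: V.linop_mul[symmetric] Eu_mul V.linop_zero)

lemma EE_id: "(\<lambda>x. \<Sum>j\<in>idx n. EE_ij j j x) = id"
  by (simp add: V.linop_Eu1 V.expand fun_eq_iff cong: sum.cong)

lemma EE_sand: assumes H: "H \<in> EE" and ij: "i \<in> idx n" "j \<in> idx n"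
  shows "EE_ij i i \<circ> (H \<circ> EE_ij j j) = (\<lambda>x. s (V.matu H i j) (EE_ij i j x))"
proof -
  have "H = V.linop (V.matu H)" using V.linop_matu E_lin H by metis
  then have "EE_ij i i \<circ> (H \<circ> EE_ij j j) = V.linop (matmul n (Eu i i) (matmul n (V.matu H) (Eu j j)))"
    by (metis V.linop_mul)
  also have "\<dots> = V.linop (\<lambda>r c. V.matu H i j * Eu i j r c)" using Eu_sand ij by metis
  finally show ?thesis by (simp add: V.linop_scale[symmetric] fun_eq_iff)
qed

lemma Eij_nz: "i \<in> idx n \<Longrightarrow> j \<in> idx n \<Longrightarrow> EE_ij i j \<noteq> (\<lambda>x. 0)"
  using V.linop_Eu1 V.crd_basis V.u_nz by (metis V.scale_one)

lemma expandE: assumes f: "f \<in> EE"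
  shows "f = (\<lambda>x. \<Sum>p\<in>PP. s (V.matu f (fst p) (snd p)) (EE_ij (fst p) (snd p) x))"
proof
  fix x
  have "f x = V.linop (V.matu f) x" using V.linop_matu E_lin f by metis
  also have "\<dots> = (\<Sum>i\<in>idx n. \<Sum>j\<in>idx n. s (V.matu f i j) (EE_ij i j x))"
    unfolding V.linop_def[of "V.matu f"] by (simp add: V.linop_Eu1 V.scale_sum_left cong: sum.cong)
  also have "\<dots> = (\<Sum>p\<in>idx n \<times> idx n. s (V.matu f (fst p) (snd p)) (EE_ij (fst p) (snd p) x))"
    by (simp add: sum.cartesian_product case_prod_beta')
  also have "\<dots> = (\<Sum>p\<in>PP. s (V.matu f (fst p) (snd p)) (EE_ij (fst p) (snd p) x))"
    using f E_char by (intro sum.mono_neutral_right) auto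
  finally show "f x = \<dots>" .
qed

context fixes \<phi> assumes phi: "\<phi> \<in> Iso_alg s s' EE EE'"
begin

lemma phi_bij: "bij_betw \<phi> EE EE'" and phi_ext: "\<phi> \<in> extensional EE"
  and phi_add: "f \<in> EE \<Longrightarrow> f2 \<in> EE \<Longrightarrow> \<phi> (\<lambda>x. f x + f2 x) = (\<lambda>y. \<phi> f y + \<phi> f2 y)"
  and phi_scale: "f \<in> EE \<Longrightarrow> \<phi> (\<lambda>x. s c (f x)) = (\<lambda>y. s' c (\<phi> f y))"
  and phi_mul: "f \<in> EE \<Longrightarrow> f2 \<in> EE \<Longrightarrow> \<phi> (f \<circ> f2) = \<phi> f \<circ> \<phi> f2"
  and phi_id: "\<phi> id = id"
  using phi by (auto simp: Iso_alg_def)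

lemma phi_into: "f \<in> EE \<Longrightarrow> \<phi> f \<in> EE'" using phi_bij bij_betwE by blast

lemma phi_zero: "\<phi> (\<lambda>x. 0) = (\<lambda>y. 0)"
proof
  fix y
  have "\<phi> (\<lambda>x. 0 + 0) = (\<lambda>y. \<phi> (\<lambda>x. 0) y + \<phi> (\<lambda>x. 0) y)" using phi_add zero_E by blast
  then have "\<phi> (\<lambda>x. 0) y = \<phi> (\<lambda>x. 0) y + \<phi> (\<lambda>x. 0) y" by (metis add_0)
  then show "\<phi> (\<lambda>x. 0) y = 0" by simp
qed

lemma phi_sum:
  assumes "finite K" "\<And>k. k \<in> K \<Longrightarrow> F k \<in> EE"
  shows "(\<lambda>x. \<Sum>k\<in>K. F k x) \<in> EE \<and> \<phi> (\<lambda>x. \<Sum>k\<in>K. F k x) = (\<lambda>y. \<Sum>k\<in>K. \<phi> (F k) y)"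
  using assms
proof (induction K rule: finite_induct)
  case empty then show ?case using zero_E phi_zero by simp
next
  case (insert k K)
  then have IH: "(\<lambda>x. \<Sum>k\<in>K. F k x) \<in> EE" "\<phi> (\<lambda>x. \<Sum>k\<in>K. F k x) = (\<lambda>y. \<Sum>k\<in>K. \<phi> (F k) y)"
    and Fk: "F k \<in> EE" by auto
  have "(\<lambda>x. F k x + (\<Sum>k\<in>K. F k x)) \<in> EE" using E_add[OF Fk IH(1)] .
  moreover have "\<phi> (\<lambda>x. F k x + (\<Sum>k\<in>K. F k x)) = (\<lambda>y. \<phi> (F k) y + (\<Sum>k\<in>K. \<phi> (F k) y))"
    using phi_add[OF Fk IH(1)] IH(2) by simp
  ultimately show ?case using insert.hyps by simp
qed

lemma phi_expand: assumes f: "f \<in> EE"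
  shows "\<phi> f = (\<lambda>y. \<Sum>p\<in>PP. s' (V.matu f (fst p) (snd p)) (\<phi> (EE_ij (fst p) (snd p)) y))"
proof -
  have F: "(\<lambda>x. s (V.matu f (fst p) (snd p)) (EE_ij (fst p) (snd p) x)) \<in> EE" if "p \<in> PP" for p
    using that E_scale Eij_E by auto
  have "\<phi> f = \<phi> (\<lambda>x. \<Sum>p\<in>PP. s (V.matu f (fst p) (snd p)) (EE_ij (fst p) (snd p) x))"
    by (rule arg_cong[where f=\<phi>, OF expandE[OF f]])
  also have "\<dots> = (\<lambda>y. \<Sum>p\<in>PP. \<phi> (\<lambda>x. s (V.matu f (fst p) (snd p)) (EE_ij (fst p) (snd p) x)) y)"
    by (rule conjunct2[OF phi_sum[OF finPP F]])
  also have "\<dots> = (\<lambda>y. \<Sum>p\<in>PP. s' (V.matu f (fst p) (snd p)) (\<phi> (EE_ij (fst p) (snd p)) y))"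
    using phi_scale Eij_E by (intro ext sum.cong refl) auto
  finally show ?thesis .
qed

end

lemma iso_unique:
  assumes p1: "\<psi>1 \<in> Iso_alg s s' EE EE'" and p2: "\<psi>2 \<in> Iso_alg s s' EE EE'"
    and eq: "\<And>i j. i \<in> idx n \<Longrightarrow> j \<in> idx n \<Longrightarrow> \<rho> i j \<Longrightarrow> \<psi>1 (EE_ij i j) = \<psi>2 (EE_ij i j)"
  shows "\<psi>1 = \<psi>2"
proof (rule extensionalityI[OF phi_ext[OF p1] phi_ext[OF p2]])
  fix f assume f: "f \<in> EE"
  show "\<psi>1 f = \<psi>2 f" using phi_expand[OF p1 f] phi_expand[OF p2 f] eq by (auto intro!: ext sum.cong)
qed

end



context flsetup begin

lemma Dpres:
  assumes G: "G \<in> EE'" and t: "t \<in> idx n" and z: "\<forall>q\<in>idx n. U.crd z q \<noteq> 0 \<longrightarrow> \<rho> q t"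
    and p: "p \<in> idx n" and nz: "U.crd (G z) p \<noteq> 0"
  shows "\<rho> p t"
proof -
  have lG: "Vector_Spaces.linear s' s' G" using G E'_char by blast
  have "G z = G (\<Sum>q\<in>idx n. s' (U.crd z q) (v' q))" by (simp add: U.expand)
  also have "\<dots> = (\<Sum>q\<in>idx n. s' (U.crd z q) (G (v' q)))" by (simp add: lin_facts(5)[OF lG])
  finally have "U.crd (G z) p = (\<Sum>q\<in>idx n. U.crd z q * U.matu G p q)"
    using p by (simp add: U.crd_sum U.crd_scale U.matu_in cong: sum.cong)
  then obtain q where q: "q \<in> idx n" "U.crd z q * U.matu G p q \<noteq> 0"
    using nz by (metis (no_types, lifting) sum.neutral)
  then have "\<rho> q t" "\<rho> p q" using z G E'_char p by auto
  then show ?thesis using rtrans p q t by blast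
qed

end

locale surjl = flsetup +
  fixes \<phi> assumes phi: "\<phi> \<in> Iso_alg s s' (EndF s n \<rho> Vf) (EndF s' n \<rho> Vf')"
begin

abbreviation F where "F i j \<equiv> \<phi> (EE_ij i j)"

lemma F_E': "i \<in> idx n \<Longrightarrow> j \<in> idx n \<Longrightarrow> \<rho> i j \<Longrightarrow> F i j \<in> EE'"
  using phi_into[OF phi] Eij_E by blast

lemma F_lin: "i \<in> idx n \<Longrightarrow> j \<in> idx n \<Longrightarrow> \<rho> i j \<Longrightarrow> Vector_Spaces.linear s' s' (F i j)"
  using F_E' E'_char by blast

lemma F_mul:
  assumes "i \<in> idx n" "j \<in> idx n" "\<rho> i j" "k \<in> idx n" "l \<in> idx n" "\<rho> k l"
  shows "F i j (F k l y) = (if j = k then F i l y else 0)"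
proof -
  have "F i j \<circ> F k l = \<phi> (EE_ij i j \<circ> EE_ij k l)" using phi_mul[OF phi] Eij_E assms by metis
  also have "\<dots> = (if j = k then F i l else (\<lambda>x. 0))" using EE_mul[of j i k l] assms phi_zero[OF phi] by auto
  finally show ?thesis by (auto simp: fun_eq_iff split: if_splits)
qed

lemma F_idem: "j \<in> idx n \<Longrightarrow> F j j (F j j y) = F j j y"
  using F_mul[of j j j j] rrefl by auto

lemma F_id: "(\<Sum>j\<in>idx n. F j j y) = y"
proof -
  have "\<phi> (\<lambda>x. \<Sum>j\<in>idx n. EE_ij j j x) = (\<lambda>y. \<Sum>j\<in>idx n. F j j y)"
    using conjunct2[OF phi_sum[OF phi, of "idx n" "\<lambda>j. EE_ij j j"]] Eij_E rrefl by auto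
  then show ?thesis using EE_id phi_id[OF phi] by (metis id_apply)
qed

lemma F_nz: assumes "i \<in> idx n" "j \<in> idx n" "\<rho> i j" shows "F i j \<noteq> (\<lambda>x. 0)"
proof
  assume "F i j = (\<lambda>x. 0)"
  then have "\<phi> (EE_ij i j) = \<phi> (\<lambda>x. 0)" using phi_zero[OF phi] by simp
  then have "EE_ij i j = (\<lambda>x. 0)"
    using phi_bij[OF phi] Eij_E[OF assms] zero_E by (metis bij_betw_def inj_onD)
  then show False using Eij_nz assms by blast
qed

lemma F_sand:
  assumes G: "G \<in> EE'" and i: "i \<in> idx n" and j: "j \<in> idx n"
  shows "\<exists>c. \<forall>y. F i i (G (F j j y)) = (if \<rho> i j then s' c (F i j y) else 0)"
proof -
  let ?H = "inv_into EE \<phi> G"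
  have H: "?H \<in> EE" using G phi_bij[OF phi] by (metis bij_betw_def inv_into_into)
  have pH: "\<phi> ?H = G" using G phi_bij[OF phi] bij_betw_inv_into_right by metis
  have "F i i \<circ> (G \<circ> F j j) = \<phi> (EE_ij i i \<circ> (?H \<circ> EE_ij j j))"
    using phi_mul[OF phi] Eij_E E_comp H i j rrefl pH by metis
  also have "\<dots> = \<phi> (\<lambda>x. s (V.matu ?H i j) (EE_ij i j x))" using EE_sand[OF H i j] by simp
  finally have e: "F i i \<circ> (G \<circ> F j j) = \<phi> (\<lambda>x. s (V.matu ?H i j) (EE_ij i j x))" .
  show ?thesis
  proof (cases "\<rho> i j")
    case True
    then have "F i i \<circ> (G \<circ> F j j) = (\<lambda>y. s' (V.matu ?H i j) (F i j y))"
      using e phi_scale[OF phi Eij_E[OF i j True]] by simp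
    then show ?thesis using True by (auto simp: fun_eq_iff)
  next
    case False
    then have "V.matu ?H i j = 0" using H E_char i j by blast
    then have "F i i \<circ> (G \<circ> F j j) = (\<lambda>y. 0)" using e phi_zero[OF phi] by simp
    then show ?thesis using False by (auto simp: fun_eq_iff)
  qed
qed

lemma rank1: assumes j: "j \<in> idx n"
  shows "\<exists>x t. t \<in> idx n \<and> x \<noteq> 0 \<and> F j j x = x \<and> (\<forall>y. \<exists>c. F j j y = s' c x) \<and>
    (\<forall>r\<in>idx n. U.crd x r \<noteq> 0 \<longrightarrow> \<rho> r t) \<and> (\<exists>r\<in>idx n. \<rho> t r \<and> U.crd x r \<noteq> 0)"
proof -
  let ?f = "F j j"
  have fE: "?f \<in> EE'" using F_E' j rrefl by blast
  have lf: "Vector_Spaces.linear s' s' ?f" using fE E'_char by blast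
  have fexp: "?f y = (\<Sum>q\<in>idx n. s' (U.crd y q) (?f (v' q)))" for y
  proof -
    have "?f y = ?f (\<Sum>q\<in>idx n. s' (U.crd y q) (v' q))" by (simp add: U.expand)
    then show ?thesis by (simp add: lin_facts(5)[OF lf])
  qed
  have "\<exists>t\<in>idx n. ?f (v' t) \<noteq> 0"
  proof (rule ccontr)
    assume "\<not> ?thesis"
    then have "?f y = 0" for y using fexp[of y] by simp
    then show False using F_nz[OF j j rrefl[OF j]] by auto
  qed
  then obtain t1 where "t1 \<in> idx n \<and> ?f (v' t1) \<noteq> 0" by blast
  then obtain t0 where t0: "t0 \<in> idx n \<and> ?f (v' t0) \<noteq> 0"
    and tmin: "\<forall>y. y \<in> idx n \<and> ?f (v' y) \<noteq> 0 \<longrightarrow> card {q\<in>idx n. \<rho> q t0} \<le> card {q\<in>idx n. \<rho> q y}"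
    using ex_has_least_nat[of "\<lambda>t. t \<in> idx n \<and> ?f (v' t) \<noteq> 0" t1 "\<lambda>t. card {q\<in>idx n. \<rho> q t}"]
    by blast
  have mini: "\<rho> t0 r" if r: "r \<in> idx n" "\<rho> r t0" "?f (v' r) \<noteq> 0" for r
  proof (rule ccontr)
    assume nr: "\<not> \<rho> t0 r"
    have "{q\<in>idx n. \<rho> q r} \<subset> {q\<in>idx n. \<rho> q t0}"
      using r t0 nr rrefl rtrans by blast
    then have "card {q\<in>idx n. \<rho> q r} < card {q\<in>idx n. \<rho> q t0}"
      by (intro psubset_card_mono) auto
    then show False using tmin r by (meson not_le)
  qed
  define x where "x = ?f (v' t0)"
  have xnz: "x \<noteq> 0" using t0 x_def by simp
  have fx: "?f x = x" using F_idem j x_def by simp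
  have xdown: "\<forall>r\<in>idx n. U.crd x r \<noteq> 0 \<longrightarrow> \<rho> r t0"
    using fE E'_char t0 by (auto simp: x_def U.matu_in)
  have "\<exists>r\<in>idx n. \<rho> t0 r \<and> U.crd x r \<noteq> 0"
  proof (rule ccontr)
    assume "\<not> ?thesis"
    then have "\<forall>r\<in>idx n. U.crd x r \<noteq> 0 \<longrightarrow> ?f (v' r) = 0" using xdown mini by blast
    then have "?f x = 0" using fexp[of x] by (auto intro!: sum.neutral)
    then show False using fx xnz by simp
  qed
  then obtain r0 where r0: "r0 \<in> idx n" "\<rho> t0 r0" "U.crd x r0 \<noteq> 0" by blast
  define G where "G = (\<lambda>y. s' (U.crd y r0) x)"
  have GE: "G \<in> EE'"
  proof -
    have "Vector_Spaces.linear s' s' G"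
      by (simp add: G_def Vector_Spaces.linear_iff vs' U.crd_add U.crd_scale U.scale_left_distrib)
    moreover have "\<rho> p q" if "p \<in> idx n" "q \<in> idx n" "U.matu G p q \<noteq> 0" for p q
    proof -
      have "U.crd (v' q) r0 \<noteq> 0" "U.crd x p \<noteq> 0" using that by (auto simp: U.matu_in G_def U.crd_scale)
      then have "q = r0" "\<rho> p t0" using that xdown r0 by (auto simp: U.crd_basis split: if_splits)
      then show ?thesis using rtrans that r0 t0 by blast
    qed
    ultimately show ?thesis using E'_char by blast
  qed
  obtain c where c: "\<forall>y. ?f (G (?f y)) = s' c (?f y)" using F_sand[OF GE j j] rrefl[OF j] by auto
  have "?f (G (?f (v' t0))) = s' (U.crd x r0) x"
    using fx by (simp add: G_def x_def lin_facts(2)[OF lf])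
  then have "s' c x = s' (U.crd x r0) x" using c x_def by simp
  then have ceq: "c = U.crd x r0" using xnz by simp
  have all: "\<exists>c'. ?f y = s' c' x" for y
  proof -
    have "s' c (?f y) = ?f (G (?f y))" using c by simp
    also have "\<dots> = s' (U.crd (?f y) r0) x" using fx by (simp add: G_def lin_facts(2)[OF lf])
    finally have "?f y = s' (inverse c * U.crd (?f y) r0) x" using ceq r0
      by (metis U.scale_scale inverse_nonzero_iff_nonzero U.scale_one left_inverse)
    then show ?thesis by blast
  qed
  show ?thesis using t0 xnz fx all xdown r0 by blast
qed

end



context surjl begin

definition pw where
  "pw = (SOME p. \<forall>j\<in>idx n. snd (p j) \<in> idx n \<and> fst (p j) \<noteq> 0 \<and> F j j (fst (p j)) = fst (p j) \<and>
     (\<forall>y. \<exists>c. F j j y = s' c (fst (p j))) \<and>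
     (\<forall>r\<in>idx n. U.crd (fst (p j)) r \<noteq> 0 \<longrightarrow> \<rho> r (snd (p j))) \<and>
     (\<exists>r\<in>idx n. \<rho> (snd (p j)) r \<and> U.crd (fst (p j)) r \<noteq> 0))"

definition w where "w j = fst (pw j)"
definition tt where "tt j = snd (pw j)"

lemma pw_prop: "\<forall>j\<in>idx n. tt j \<in> idx n \<and> w j \<noteq> 0 \<and> F j j (w j) = w j \<and>
     (\<forall>y. \<exists>c. F j j y = s' c (w j)) \<and>
     (\<forall>r\<in>idx n. U.crd (w j) r \<noteq> 0 \<longrightarrow> \<rho> r (tt j)) \<and>
     (\<exists>r\<in>idx n. \<rho> (tt j) r \<and> U.crd (w j) r \<noteq> 0)"
proof -
  have "\<forall>j\<in>idx n. \<exists>q. snd q \<in> idx n \<and> fst q \<noteq> 0 \<and> F j j (fst q) = fst q \<and>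
     (\<forall>y. \<exists>c. F j j y = s' c (fst q)) \<and>
     (\<forall>r\<in>idx n. U.crd (fst q) r \<noteq> 0 \<longrightarrow> \<rho> r (snd q)) \<and>
     (\<exists>r\<in>idx n. \<rho> (snd q) r \<and> U.crd (fst q) r \<noteq> 0)"
  proof
    fix j assume "j \<in> idx n"
    from rank1[OF this] obtain x t where "t \<in> idx n \<and> x \<noteq> 0 \<and> F j j x = x \<and> (\<forall>y. \<exists>c. F j j y = s' c x) \<and>
      (\<forall>r\<in>idx n. U.crd x r \<noteq> 0 \<longrightarrow> \<rho> r t) \<and> (\<exists>r\<in>idx n. \<rho> t r \<and> U.crd x r \<noteq> 0)" by blast
    then show "\<exists>q. snd q \<in> idx n \<and> fst q \<noteq> 0 \<and> F j j (fst q) = fst q \<and>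
     (\<forall>y. \<exists>c. F j j y = s' c (fst q)) \<and>
     (\<forall>r\<in>idx n. U.crd (fst q) r \<noteq> 0 \<longrightarrow> \<rho> r (snd q)) \<and>
     (\<exists>r\<in>idx n. \<rho> (snd q) r \<and> U.crd (fst q) r \<noteq> 0)" by (intro exI[of _ "(x, t)"]) simp
  qed
  then have "\<exists>p. \<forall>j\<in>idx n. snd (p j) \<in> idx n \<and> fst (p j) \<noteq> 0 \<and> F j j (fst (p j)) = fst (p j) \<and>
     (\<forall>y. \<exists>c. F j j y = s' c (fst (p j))) \<and>
     (\<forall>r\<in>idx n. U.crd (fst (p j)) r \<noteq> 0 \<longrightarrow> \<rho> r (snd (p j))) \<and>
     (\<exists>r\<in>idx n. \<rho> (snd (p j)) r \<and> U.crd (fst (p j)) r \<noteq> 0)" by (rule bchoice)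
  then show ?thesis unfolding w_def tt_def pw_def by (rule someI_ex)
qed

lemma tt_idx: "j \<in> idx n \<Longrightarrow> tt j \<in> idx n" using pw_prop by blast
lemma w_nz: "j \<in> idx n \<Longrightarrow> w j \<noteq> 0" using pw_prop by blast
lemma Fw: "j \<in> idx n \<Longrightarrow> F j j (w j) = w j" using pw_prop by blast
lemma Fim: "j \<in> idx n \<Longrightarrow> \<exists>c. F j j y = s' c (w j)" using pw_prop by blast
lemma lvd: "j \<in> idx n \<Longrightarrow> r \<in> idx n \<Longrightarrow> U.crd (w j) r \<noteq> 0 \<Longrightarrow> \<rho> r (tt j)" using pw_prop by blast
lemma lvc: "j \<in> idx n \<Longrightarrow> \<exists>r\<in>idx n. \<rho> (tt j) r \<and> U.crd (w j) r \<noteq> 0" using pw_prop by blast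

lemma Flin': "j \<in> idx n \<Longrightarrow> Vector_Spaces.linear s' s' (F j j)" using F_lin rrefl by blast

lemma Fjw: "j \<in> idx n \<Longrightarrow> r \<in> idx n \<Longrightarrow> F j j (w r) = (if j = r then w r else 0)"
proof -
  assume j: "j \<in> idx n" and r: "r \<in> idx n"
  have "F j j (w r) = F j j (F r r (w r))" using Fw[OF r] by simp
  also have "\<dots> = (if j = r then F j r (w r) else 0)" by (rule F_mul[OF j j rrefl[OF j] r r rrefl[OF r]])
  also have "\<dots> = (if j = r then w r else 0)" using Fw[OF r] by simp
  finally show ?thesis .
qed

lemma w_basis: "is_basis_fam s' n w"
proof -
  have inj: "inj_on w (idx n)"
  proof (rule inj_onI, rule ccontr)
    fix i j assume i: "i \<in> idx n" and j: "j \<in> idx n" and e: "w i = w j" and ne: "i \<noteq> j"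
    have "F i i (w i) = 0" using Fjw[OF i j] ne e by simp
    then show False using Fw[OF i] w_nz[OF i] by simp
  qed
  have sp: "U.span (w ` idx n) = UNIV"
  proof -
    have "y \<in> U.span (w ` idx n)" for y
    proof -
      have "F j j y \<in> U.span (w ` idx n)" if j: "j \<in> idx n" for j
        using Fim[OF j, of y] j by (metis U.span_base U.span_scale image_eqI)
      then have "(\<Sum>j\<in>idx n. F j j y) \<in> U.span (w ` idx n)" by (intro U.span_sum) auto
      then show ?thesis using F_id by simp
    qed
    then show ?thesis by auto
  qed
  have ind: "\<not> U.dependent (w ` idx n)"
  proof
    assume "U.dependent (w ` idx n)"
    then obtain c where c1: "\<exists>b\<in>w ` idx n. c b \<noteq> 0" and c2: "(\<Sum>b\<in>w ` idx n. s' (c b) b) = 0"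
      using U.dependent_finite[of "w ` idx n"] by auto
    have z: "(\<Sum>j\<in>idx n. s' (c (w j)) (w j)) = 0" using c2 inj by (simp add: sum.reindex)
    have "c (w k) = 0" if k: "k \<in> idx n" for k
    proof -
      have "0 = F k k (\<Sum>j\<in>idx n. s' (c (w j)) (w j))" using z lin_facts(3)[OF Flin'[OF k]] by simp
      also have "\<dots> = (\<Sum>j\<in>idx n. s' (c (w j)) (F k k (w j)))" by (simp add: lin_facts(5)[OF Flin'[OF k]])
      also have "\<dots> = s' (c (w k)) (w k)" using k by (simp add: Fjw if_distrib[of "s' _"] cong: if_cong)
      finally show ?thesis using w_nz[OF k] by simp
    qed
    then show False using c1 by auto
  qed
  show ?thesis using inj sp ind by (simp add: is_basis_fam_def)
qed

sublocale W: bfam s' n w using vs' w_basis by (simp add: bfam_def bfam_axioms_def)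

lemma F_gen: assumes i: "i \<in> idx n" and j: "j \<in> idx n" and ij: "\<rho> i j"
  shows "F i j y = s' (W.crd (F i j (w j)) i * W.crd y j) (w i)"
proof -
  have lF: "Vector_Spaces.linear s' s' (F i j)" using F_lin i j ij by blast
  define c where "c = W.crd (F i j (w j)) i"
  have Fr: "F i j (w r) = (if r = j then s' c (w i) else 0)" if r: "r \<in> idx n" for r
  proof -
    have "F i j (w r) = F i j (F r r (w r))" using Fw[OF r] by simp
    also have "\<dots> = (if j = r then F i j (w r) else 0)" using F_mul[OF i j ij r r rrefl[OF r]] by simp
    finally have e1: "F i j (w r) = (if j = r then F i j (w r) else 0)" .
    have "F i j (w j) = F i i (F i j (w j))" using F_mul[OF i i rrefl[OF i] i j ij] by simp
    also have "\<dots> = s' (W.crd (F i j (w j)) i) (w i)"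
    proof -
      have "F i j (w j) = (\<Sum>q\<in>idx n. s' (W.crd (F i j (w j)) q) (w q))" by (simp add: W.expand)
      then have "F i i (F i j (w j)) = (\<Sum>q\<in>idx n. s' (W.crd (F i j (w j)) q) (F i i (w q)))"
        by (metis lin_facts(5)[OF Flin'[OF i]])
      also have "\<dots> = s' (W.crd (F i j (w j)) i) (w i)"
        using i by (simp add: Fjw if_distrib[of "s' _"] cong: if_cong)
      finally show ?thesis .
    qed
    finally have "F i j (w j) = s' c (w i)" unfolding c_def .
    then show ?thesis using e1 by (cases "r = j") auto
  qed
  have "F i j y = F i j (\<Sum>r\<in>idx n. s' (W.crd y r) (w r))" by (simp add: W.expand)
  also have "\<dots> = (\<Sum>r\<in>idx n. s' (W.crd y r) (F i j (w r)))" by (simp add: lin_facts(5)[OF lF])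
  also have "\<dots> = s' (c * W.crd y j) (w i)"
    using j by (simp add: Fr if_distrib[of "s' _"] mult.commute cong: if_cong)
  finally show ?thesis unfolding c_def .
qed

definition aa where "aa i j = (if i \<in> idx n \<and> j \<in> idx n \<and> \<rho> i j then W.crd (F i j (w j)) i else 0)"

lemma F_aa: assumes "i \<in> idx n" "j \<in> idx n" "\<rho> i j" shows "F i j y = s' (aa i j * W.crd y j) (w i)"
proof -
  have "F i j y = s' (W.crd (F i j (w j)) i * W.crd y j) (w i)" by (rule F_gen[OF assms])
  then show ?thesis using assms by (simp add: aa_def)
qed

lemma aa_nz: assumes "i \<in> idx n" "j \<in> idx n" "\<rho> i j" shows "aa i j \<noteq> 0"
proof
  assume "aa i j = 0"
  then have "F i j = (\<lambda>x. 0)" using F_aa[OF assms] by auto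
  then show False using F_nz assms by blast
qed

lemma aaT: "aa \<in> Tfam n \<rho>"
proof -
  have "aa i j * aa j r = aa i r" if ij: "i \<in> idx n" "j \<in> idx n" "r \<in> idx n" "\<rho> i j" "\<rho> j r" for i j r
  proof -
    have ir: "\<rho> i r" using rtrans ij by blast
    have "F i j (F j r (w r)) = F i r (w r)" using F_mul ij by simp
    then have "s' (aa i j * aa j r) (w i) = s' (aa i r) (w i)"
      using ij ir by (simp add: F_aa W.crd_scale W.crd_basis mult.commute mult.left_commute)
    then show ?thesis using w_nz ij by simp
  qed
  then show ?thesis using aa_nz by (auto simp: Tfam_def aa_def)
qed

lemma aa_diag: assumes j: "j \<in> idx n" shows "aa j j = 1"
proof -
  have "aa j j \<noteq> 0" "aa j j * aa j j = aa j j" using aaT j rrefl by (auto simp: Tfam_def)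
  then show ?thesis by simp
qed

lemma Fjj: "j \<in> idx n \<Longrightarrow> F j j y = s' (W.crd y j) (w j)"
  using F_aa[of j j y] rrefl aa_diag by simp

lemma Ev: assumes q: "q \<in> idx n" and j: "j \<in> idx n" and nz: "W.crd (v' q) j \<noteq> 0"
  shows "\<rho> (tt j) q"
proof -
  obtain r where r: "r \<in> idx n" "\<rho> (tt j) r" "U.crd (w j) r \<noteq> 0" using lvc[OF j] by blast
  have FE: "F j j \<in> EE'" using F_E' j rrefl by blast
  have "F j j (v' q) = s' (W.crd (v' q) j) (w j)" using Fjj[OF j] .
  then have "U.crd (F j j (v' q)) r \<noteq> 0" using nz r by (simp add: U.crd_scale)
  moreover have dz: "\<forall>qa\<in>idx n. U.crd (v' q) qa \<noteq> 0 \<longrightarrow> \<rho> qa q"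
    using q by (auto simp: U.crd_basis rrefl)
  ultimately have "\<rho> r q" using Dpres[OF FE q dz r(1)] by blast
  then show ?thesis using rtrans r tt_idx j q by blast
qed

lemma rho_tt: assumes i: "i \<in> idx n" and j: "j \<in> idx n"
  shows "\<rho> (tt i) (tt j) \<longleftrightarrow> \<rho> i j"
proof
  assume ij: "\<rho> i j"
  obtain r where r: "r \<in> idx n" "\<rho> (tt i) r" "U.crd (w i) r \<noteq> 0" using lvc[OF i] by blast
  have FE: "F i j \<in> EE'" using F_E' i j ij by blast
  have "U.crd (F i j (w j)) r \<noteq> 0"
    using F_aa[OF i j ij] aa_nz[OF i j ij] r j by (simp add: U.crd_scale W.crd_basis)
  then have "\<rho> r (tt j)" using Dpres[OF FE tt_idx[OF j] _ r(1)] lvd j by blast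
  then show "\<rho> (tt i) (tt j)" using rtrans r tt_idx i j by blast
next
  assume tij: "\<rho> (tt i) (tt j)"
  define G where "G = (\<lambda>y. s' (W.crd y j) (w i))"
  have GE: "G \<in> EE'"
  proof -
    have "Vector_Spaces.linear s' s' G"
      by (simp add: G_def Vector_Spaces.linear_iff vs' W.crd_add W.crd_scale U.scale_left_distrib)
    moreover have "\<rho> p q" if pq: "p \<in> idx n" "q \<in> idx n" "U.matu G p q \<noteq> 0" for p q
    proof -
      have "W.crd (v' q) j \<noteq> 0" "U.crd (w i) p \<noteq> 0" using pq by (auto simp: U.matu_in G_def U.crd_scale)
      then have "\<rho> (tt j) q" "\<rho> p (tt i)" using Ev pq j lvd i by auto
      then show ?thesis using rtrans pq tij tt_idx i j by meson
    qed
    ultimately show ?thesis using E'_char by blast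
  qed
  obtain c where c: "\<forall>y. F i i (G (F j j y)) = (if \<rho> i j then s' c (F i j y) else 0)"
    using F_sand[OF GE i j] by blast
  have "F i i (G (F j j y)) = G y" for y
  proof -
    have "F j j y = s' (W.crd y j) (w j)" using Fjj[OF j] .
    then have "G (F j j y) = s' (W.crd y j) (w i)" using j by (simp add: G_def W.crd_scale W.crd_basis)
    then show ?thesis using lin_facts(2)[OF Flin'[OF i]] Fw[OF i] by (simp add: G_def)
  qed
  then have "G (w j) = (if \<rho> i j then s' c (F i j (w j)) else 0)" using c by metis
  moreover have "G (w j) = w i" using j by (simp add: G_def W.crd_basis)
  ultimately show "\<rho> i j" using w_nz[OF i] by (auto split: if_splits)
qed

end



context surjl begin

lemma card_span:
  assumes S: "S \<subseteq> idx n" and T: "T \<subseteq> idx n" and e: "U.span (v' ` S) = U.span (w ` T)"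
  shows "card S = card T"
proof -
  have iS: "U.independent (v' ` S)" using U.indep U.independent_mono S by blast
  have iT: "U.independent (w ` T)" using W.indep U.independent_mono T by blast
  have "U.dim (v' ` S) = card (w ` T)" using U.dim_eq_card[OF e[symmetric] iT] .
  moreover have "U.dim (v' ` S) = card (v' ` S)" using U.dim_eq_card_independent[OF iS] .
  moreover have "card (v' ` S) = card S" using card_image inj_on_subset[OF U.injU S] by blast
  moreover have "card (w ` T) = card T" using card_image inj_on_subset[OF W.injU T] by blast
  ultimately show ?thesis by simp
qed

lemma cnt: assumes b: "b \<in> idx n"
  shows "card {j\<in>idx n. \<rho> (tt j) b \<and> \<rho> b (tt j)} = card (cls n \<rho> b)"
proof -
  let ?D = "{r\<in>idx n. \<rho> r b}" and ?Ds = "{r\<in>idx n. \<rho> r b \<and> \<not> \<rho> b r}"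
  let ?J = "{j\<in>idx n. \<rho> (tt j) b}" and ?Js = "{j\<in>idx n. \<rho> (tt j) b \<and> \<not> \<rho> b (tt j)}"
  have e1: "U.span (v' ` ?D) = U.span (w ` ?J)"
  proof (subst U.span_eq, intro conjI subsetI)
    fix x assume "x \<in> v' ` ?D"
    then obtain r where r: "r \<in> ?D" "x = v' r" by blast
    have "\<forall>j\<in>idx n - ?J. W.crd (v' r) j = 0"
      using Ev r rtrans tt_idx b by blast
    then show "x \<in> U.span (w ` ?J)" using W.in_span_iff[of ?J] r by auto
  next
    fix x assume "x \<in> w ` ?J"
    then obtain j where j: "j \<in> ?J" "x = w j" by blast
    have "\<forall>q\<in>idx n - ?D. U.crd (w j) q = 0"
      using lvd j rtrans tt_idx b by blast
    then show "x \<in> U.span (v' ` ?D)" using U.in_span_iff[of ?D] j by auto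
  qed
  have e2: "U.span (v' ` ?Ds) = U.span (w ` ?Js)"
  proof (subst U.span_eq, intro conjI subsetI)
    fix x assume "x \<in> v' ` ?Ds"
    then obtain r where r: "r \<in> ?Ds" "x = v' r" by blast
    have "\<forall>j\<in>idx n - ?Js. W.crd (v' r) j = 0"
    proof (intro ballI, rule ccontr)
      fix j assume j: "j \<in> idx n - ?Js" and nz: "W.crd (v' r) j \<noteq> 0"
      have "\<rho> (tt j) r" using Ev nz r j by blast
      then show False using j r rtrans tt_idx b by blast
    qed
    then show "x \<in> U.span (w ` ?Js)" using W.in_span_iff[of ?Js] r by auto
  next
    fix x assume "x \<in> w ` ?Js"
    then obtain j where j: "j \<in> ?Js" "x = w j" by blast
    have "\<forall>q\<in>idx n - ?Ds. U.crd (w j) q = 0"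
    proof (intro ballI, rule ccontr)
      fix q assume q: "q \<in> idx n - ?Ds" and nz: "U.crd (w j) q \<noteq> 0"
      have "\<rho> q (tt j)" using lvd nz q j by blast
      then show False using j q rtrans tt_idx b by blast
    qed
    then show "x \<in> U.span (v' ` ?Ds)" using U.in_span_iff[of ?Ds] j by auto
  qed
  have c1: "card ?D = card ?J" by (rule card_span[OF _ _ e1]) auto
  have c2: "card ?Ds = card ?Js" by (rule card_span[OF _ _ e2]) auto
  have x1: "cls n \<rho> b = ?D - ?Ds" by (auto simp: cls_def)
  have x2: "?Ds \<subseteq> ?D" "finite ?Ds" by auto
  have x3: "card (cls n \<rho> b) = card ?D - card ?Ds" unfolding x1 by (rule card_Diff_subset[OF x2(2) x2(1)])
  have y1: "{j\<in>idx n. \<rho> (tt j) b \<and> \<rho> b (tt j)} = ?J - ?Js" by auto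
  have y2: "?Js \<subseteq> ?J" "finite ?Js" by auto
  have y3: "card {j\<in>idx n. \<rho> (tt j) b \<and> \<rho> b (tt j)} = card ?J - card ?Js"
    unfolding y1 by (rule card_Diff_subset[OF y2(2) y2(1)])
  show ?thesis using c1 c2 x3 y3 by simp
qed

definition gg where "gg = restrict (\<lambda>\<alpha>. cls n \<rho> (tt (SOME j. j \<in> idx n \<and> \<alpha> = cls n \<rho> j))) (Cls n \<rho>)"

lemma tt_cls: "i \<in> idx n \<Longrightarrow> j \<in> idx n \<Longrightarrow> cls n \<rho> (tt i) = cls n \<rho> (tt j) \<longleftrightarrow> cls n \<rho> i = cls n \<rho> j"
  using cls_eq tt_idx rho_tt by simp

lemma gg_cls: assumes j: "j \<in> idx n" shows "gg (cls n \<rho> j) = cls n \<rho> (tt j)"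
proof -
  let ?j = "SOME j'. j' \<in> idx n \<and> cls n \<rho> j = cls n \<rho> j'"
  have "\<exists>j'. j' \<in> idx n \<and> cls n \<rho> j = cls n \<rho> j'" using j by blast
  then have "?j \<in> idx n \<and> cls n \<rho> j = cls n \<rho> ?j" by (rule someI_ex)
  then show ?thesis using j tt_cls by (simp add: gg_def ClsI)
qed

lemma gg_Aut0: "gg \<in> Aut0 n \<rho>"
proof -
  have ext: "gg \<in> extensional (Cls n \<rho>)" by (simp add: gg_def)
  have inj: "inj_on gg (Cls n \<rho>)"
  proof (rule inj_onI)
    fix \<alpha> \<beta> assume a: "\<alpha> \<in> Cls n \<rho>" and b: "\<beta> \<in> Cls n \<rho>" and e: "gg \<alpha> = gg \<beta>"
    obtain i where i: "i \<in> idx n" "\<alpha> = cls n \<rho> i" using a by (elim ClsE)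
    obtain j where j: "j \<in> idx n" "\<beta> = cls n \<rho> j" using b by (elim ClsE)
    show "\<alpha> = \<beta>" using e i j gg_cls tt_cls by simp
  qed
  have img: "gg ` Cls n \<rho> = Cls n \<rho>"
  proof
    show "gg ` Cls n \<rho> \<subseteq> Cls n \<rho>" using gg_cls ClsI tt_idx by (auto elim: ClsE)
    show "Cls n \<rho> \<subseteq> gg ` Cls n \<rho>"
    proof
      fix \<beta> assume b: "\<beta> \<in> Cls n \<rho>"
      obtain q where q: "q \<in> idx n" "\<beta> = cls n \<rho> q" using b by (elim ClsE)
      have "card (cls n \<rho> q) > 0" using cls_self[OF q(1)] by (auto simp: card_gt_0_iff)
      then have "{j\<in>idx n. \<rho> (tt j) q \<and> \<rho> q (tt j)} \<noteq> {}" using cnt[OF q(1)] by (metis card.empty less_irrefl)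
      then obtain j where j: "j \<in> idx n" "\<rho> (tt j) q" "\<rho> q (tt j)" by blast
      then have "gg (cls n \<rho> j) = \<beta>" using gg_cls q cls_eq tt_idx by simp
      then show "\<beta> \<in> gg ` Cls n \<rho>" using ClsI[OF j(1)] by blast
    qed
  qed
  have cle: "cle \<rho> \<alpha> \<beta> \<longleftrightarrow> cle \<rho> (gg \<alpha>) (gg \<beta>)" if a: "\<alpha> \<in> Cls n \<rho>" and b: "\<beta> \<in> Cls n \<rho>" for \<alpha> \<beta>
  proof -
    obtain i where i: "i \<in> idx n" "\<alpha> = cls n \<rho> i" using a by (elim ClsE)
    obtain j where j: "j \<in> idx n" "\<beta> = cls n \<rho> j" using b by (elim ClsE)
    show ?thesis using i j gg_cls cle_cls tt_idx rho_tt by simp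
  qed
  have crd: "card (gg \<alpha>) = card \<alpha>" if a: "\<alpha> \<in> Cls n \<rho>" for \<alpha>
  proof -
    obtain j where j: "j \<in> idx n" "\<alpha> = cls n \<rho> j" using a by (elim ClsE)
    have "card (gg \<alpha>) = card (cls n \<rho> (tt j))" using gg_cls j by simp
    also have "\<dots> = card {i\<in>idx n. \<rho> (tt i) (tt j) \<and> \<rho> (tt j) (tt i)}" using cnt tt_idx j by simp
    also have "{i\<in>idx n. \<rho> (tt i) (tt j) \<and> \<rho> (tt j) (tt i)} = cls n \<rho> j"
      using rho_tt j by (auto simp: cls_def)
    finally show ?thesis using j by simp
  qed
  show ?thesis unfolding Aut0_def using ext inj img cle crd by (auto simp: bij_betw_def)
qed

abbreviation gt' where "gt' \<equiv> gtilde n \<rho> gg"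
definition gi where "gi = inv_into (idx n) gt'"

lemma gt_bij': "bij_betw gt' (idx n) (idx n)" using gt_bij[OF gg_Aut0] .
lemma gi_gt: "j \<in> idx n \<Longrightarrow> gi (gt' j) = j"
  using gt_bij' by (simp add: gi_def bij_betw_def)
lemma gt_gi: "t \<in> idx n \<Longrightarrow> gt' (gi t) = t"
  using gt_bij' by (simp add: gi_def bij_betw_inv_into_right)
lemma gi_idx: "t \<in> idx n \<Longrightarrow> gi t \<in> idx n"
  using gt_bij' by (metis bij_betwE bij_betw_inv_into gi_def)
lemma gt_tt: "j \<in> idx n \<Longrightarrow> \<rho> (tt j) (gt' j) \<and> \<rho> (gt' j) (tt j)"
  using cls_gt[OF gg_Aut0] gg_cls cls_eq gt_idx[OF gg_Aut0] tt_idx by metis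

definition AA where "AA i t = (if i \<in> idx n \<and> t \<in> idx n then U.crd (w (gi t)) i else 0)"
definition BB where "BB t i = (if t \<in> idx n \<and> i \<in> idx n then W.crd (v' i) (gi t) else 0)"

lemma AA_M: "AA \<in> Mrho n \<rho>"
proof -
  have "\<rho> i t" if "i \<in> idx n" "t \<in> idx n" "U.crd (w (gi t)) i \<noteq> 0" for i t
  proof -
    have "\<rho> i (tt (gi t))" using lvd that gi_idx by blast
    moreover have "\<rho> (tt (gi t)) t" using gt_tt[OF gi_idx[OF that(2)]] gt_gi[OF that(2)] by simp
    ultimately show ?thesis using rtrans that tt_idx gi_idx by blast
  qed
  then show ?thesis by (auto simp: Mrho_def AA_def split: if_splits)
qed

lemma BB_M: "BB \<in> Mrho n \<rho>"
proof -
  have "\<rho> t i" if "t \<in> idx n" "i \<in> idx n" "W.crd (v' i) (gi t) \<noteq> 0" for i t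
  proof -
    have "\<rho> (tt (gi t)) i" using Ev that gi_idx by blast
    moreover have "\<rho> t (tt (gi t))" using gt_tt[OF gi_idx[OF that(1)]] gt_gi[OF that(1)] by simp
    ultimately show ?thesis using rtrans that tt_idx gi_idx by blast
  qed
  then show ?thesis by (auto simp: Mrho_def BB_def split: if_splits)
qed

lemma AB: "matmul n AA BB = matone n"
proof (intro ext)
  fix i r
  show "matmul n AA BB i r = matone n i r"
  proof (cases "i \<in> idx n \<and> r \<in> idx n")
    case True
    then have i: "i \<in> idx n" and r: "r \<in> idx n" by auto
    have "matmul n AA BB i r = (\<Sum>j\<in>idx n. AA i (gt' j) * BB (gt' j) r)"
      unfolding matmul_def using sum.reindex_bij_betw[OF gt_bij', of "\<lambda>t. AA i t * BB t r"] by simp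
    also have "\<dots> = (\<Sum>j\<in>idx n. W.crd (v' r) j * U.crd (w j) i)"
      using i r by (intro sum.cong refl) (simp add: AA_def BB_def gi_gt gt_idx[OF gg_Aut0])
    also have "\<dots> = U.crd (\<Sum>j\<in>idx n. s' (W.crd (v' r) j) (w j)) i" by (simp add: U.crd_sum U.crd_scale)
    also have "\<dots> = U.crd (v' r) i" by (simp add: W.expand)
    finally show ?thesis using i r by (simp add: U.crd_basis matone_def)
  next
    case False then show ?thesis by (auto simp: matmul_def matone_def AA_def BB_def)
  qed
qed

lemma BA: "matmul n BB AA = matone n"
proof (intro ext)
  fix t k
  show "matmul n BB AA t k = matone n t k"
  proof (cases "t \<in> idx n \<and> k \<in> idx n")
    case True
    then have t: "t \<in> idx n" and k: "k \<in> idx n" by auto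
    have "matmul n BB AA t k = (\<Sum>i\<in>idx n. U.crd (w (gi k)) i * W.crd (v' i) (gi t))"
      unfolding matmul_def using t k by (intro sum.cong refl) (simp add: AA_def BB_def)
    also have "\<dots> = W.crd (\<Sum>i\<in>idx n. s' (U.crd (w (gi k)) i) (v' i)) (gi t)" by (simp add: W.crd_sum W.crd_scale)
    also have "\<dots> = W.crd (w (gi k)) (gi t)" by (simp add: U.expand)
    also have "\<dots> = (if gi t = gi k then 1 else 0)" using gi_idx t k by (simp add: W.crd_basis)
    also have "\<dots> = (if t = k then 1 else 0)" using gt_gi t k by metis
    finally show ?thesis using t by (simp add: matone_def)
  next
    case False then show ?thesis by (auto simp: matmul_def matone_def AA_def BB_def)
  qed
qed

lemma AA_U: "AA \<in> Umat n \<rho>" using AA_M BB_M AB BA by (auto simp: Umat_def)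

lemma wvec_AA: "j \<in> idx n \<Longrightarrow> wvec s' n \<rho> v' AA gg j = w j"
  by (simp add: wvec_def matg_def AA_def gi_gt gt_idx[OF gg_Aut0] U.expand cong: sum.cong)

lemma trip_in: "(AA, gg, aa) \<in> Triples n \<rho>"
  using AA_U gg_Aut0 aaT by (simp add: Triples_def)

lemma surj_main: "\<exists>x\<in>Triples n \<rho>. Fmap s s' n \<rho> Vf v v' x = \<phi>"
proof
  interpret X: trip n \<rho> s s' Vf Vf' v v' AA gg aa by unfold_locales (rule trip_in)
  have img: "X.w ` idx n = w ` idx n" using wvec_AA by (auto simp: image_iff)
  have crdX: "X.W.crd z j = W.crd z j" if "j \<in> idx n" for z j
    using that img wvec_AA by (simp add: X.W.crd_def W.crd_def)
  show "Fmap s s' n \<rho> Vf v v' (AA, gg, aa) = \<phi>"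
  proof (rule iso_unique[OF X.Phi_iso phi])
    fix i j assume ij: "i \<in> idx n" "j \<in> idx n" "\<rho> i j"
    show "X.Phi (EE_ij i j) = \<phi> (EE_ij i j)"
      using X.Phi_E[OF ij] F_aa[OF ij] crdX[OF ij(2)] wvec_AA[OF ij(1)] by (simp add: fun_eq_iff)
  qed
qed (rule trip_in)

end



context flsetup begin

abbreviation Fm where "Fm \<equiv> Fmap s s' n \<rho> Vf v v'"

lemma part1': "x \<in> Triples n \<rho> \<Longrightarrow> y \<in> Triples n \<rho> \<Longrightarrow> Fm x = Fm y \<longleftrightarrow> (x, y) \<in> approx_rel n \<rho>"
  using part1 by (cases x, cases y) auto

lemma Fm_iso: "x \<in> Triples n \<rho> \<Longrightarrow> Fm x \<in> Iso_alg s s' EE EE'"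
proof (cases x)
  case (fields A g a)
  assume x: "x \<in> Triples n \<rho>"
  interpret X: trip n \<rho> s s' Vf Vf' v v' A g a by unfold_locales (use x fields in simp)
  show ?thesis using X.Phi_iso fields by simp
qed

lemma Fm_surj: "\<psi> \<in> Iso_alg s s' EE EE' \<Longrightarrow> \<exists>x\<in>Triples n \<rho>. Fm x = \<psi>"
proof -
  assume p: "\<psi> \<in> Iso_alg s s' EE EE'"
  interpret S: surjl n \<rho> s s' Vf Vf' v v' \<psi> by unfold_locales (rule p)
  show ?thesis by (rule S.surj_main)
qed

lemma part2: "bij_betw (\<lambda>X. the_elem (Fm ` X)) (Triples n \<rho> // approx_rel n \<rho>) (Iso_alg s s' EE EE')"
proof -
  let ?T = "Triples n \<rho>" and ?R = "approx_rel n \<rho>"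
  have cl: "?R `` {x} = {y\<in>?T. Fm y = Fm x}" if x: "x \<in> ?T" for x
  proof -
    have yT: "(x, y) \<in> ?R \<Longrightarrow> y \<in> ?T" for y unfolding approx_rel_def by blast
    have "(x, y) \<in> ?R \<longleftrightarrow> y \<in> ?T \<and> Fm y = Fm x" for y
      using part1'[OF x, of y] yT[of y] by metis
    then show ?thesis by auto
  qed
  have te: "the_elem (Fm ` (?R `` {x})) = Fm x" if x: "x \<in> ?T" for x
  proof -
    have "Fm ` (?R `` {x}) = {Fm x}" using cl[OF x] x by auto
    then show ?thesis by simp
  qed
  show ?thesis unfolding bij_betw_def
  proof
    show "inj_on (\<lambda>X. the_elem (Fm ` X)) (?T // ?R)"
    proof (rule inj_onI)
      fix X1 X2 assume X1: "X1 \<in> ?T // ?R" and X2: "X2 \<in> ?T // ?R"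
        and e: "the_elem (Fm ` X1) = the_elem (Fm ` X2)"
      obtain x1 where x1: "x1 \<in> ?T" "X1 = ?R `` {x1}" using X1 by (auto elim: quotientE)
      obtain x2 where x2: "x2 \<in> ?T" "X2 = ?R `` {x2}" using X2 by (auto elim: quotientE)
      have "Fm x1 = Fm x2" using e te x1 x2 by simp
      then show "X1 = X2" using cl x1 x2 by simp
    qed
    show "(\<lambda>X. the_elem (Fm ` X)) ` (?T // ?R) = Iso_alg s s' EE EE'"
    proof
      show "(\<lambda>X. the_elem (Fm ` X)) ` (?T // ?R) \<subseteq> Iso_alg s s' EE EE'"
        using te Fm_iso by (auto elim!: quotientE)
      show "Iso_alg s s' EE EE' \<subseteq> (\<lambda>X. the_elem (Fm ` X)) ` (?T // ?R)"
      proof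
        fix \<psi> assume "\<psi> \<in> Iso_alg s s' EE EE'"
        then obtain x where x: "x \<in> ?T" "Fm x = \<psi>" using Fm_surj by blast
        have "?R `` {x} \<in> ?T // ?R" using x by (auto intro: quotientI)
        moreover have "the_elem (Fm ` (?R `` {x})) = \<psi>" using te x by simp
        ultimately show "\<psi> \<in> (\<lambda>X. the_elem (Fm ` X)) ` (?T // ?R)" by force
      qed
    qed
  qed
qed

end

theorem theorem4p3:
  fixes s :: "'k::field \<Rightarrow> 'v::ab_group_add \<Rightarrow> 'v"
    and s' :: "'k \<Rightarrow> 'w::ab_group_add \<Rightarrow> 'w"
    and n :: nat and \<rho> :: "nat \<Rightarrow> nat \<Rightarrow> bool"
    and Vf :: "nat set \<Rightarrow> 'v set" and Vf' :: "nat set \<Rightarrow> 'w set"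
    and v :: "nat \<Rightarrow> 'v" and v' :: "nat \<Rightarrow> 'w"
  assumes "n \<ge> 1"
    and "preorder_on_idx n \<rho>"
    and "vector_space s" and "vector_space s'"
    and "adapted_flag s n \<rho> Vf v" and "adapted_flag s' n \<rho> Vf' v'"
  shows "(\<forall>x\<in>Triples n \<rho>. \<forall>y\<in>Triples n \<rho>.
            Fmap s s' n \<rho> Vf v v' x = Fmap s s' n \<rho> Vf v v' y \<longleftrightarrow> (x, y) \<in> approx_rel n \<rho>)
      \<and> bij_betw (\<lambda>X. the_elem (Fmap s s' n \<rho> Vf v v' ` X))
           (Triples n \<rho> // approx_rel n \<rho>)
           (Iso_alg s s' (EndF s n \<rho> Vf) (EndF s' n \<rho> Vf'))"
proof -
  interpret S: flsetup n \<rho> s s' Vf Vf' v v'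
    using assms by (simp add: flsetup_def flsetup_axioms_def pre_def)
  show ?thesis using S.part1' S.part2 by blast
qed

end
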